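(* The set of $G\in\mathcal{C}(\mathbb{T}^{\mathbb{N}})$ that are isomorphic (as topological groups) to the universal solenoid is dense in $\mathcal{C}(\mathbb{T}^{\mathbb{N}})$.
   Context: Let $\mathbb{T}=\mathbb{R}/\mathbb{Z}$ with its usual metric $d_{\mathbb{T}}$ (diameter $1/2$), and $\mathbb{T}^{\mathbb{N}}$ with metric $d(x,y)=\sum_{n=0}^\infty 2^{-n}d_{\mathbb{T}}(x(n),y(n))$. $\mathcal{C}(\mathbb{T}^{\mathbb{N}})$ is the set of nonempty compact connected subgroups of $\mathbb{T}^{\mathbb{N}}$ with the Hausdorff metric induced by $d$. The universal solenoid is the inverse limit of $(S_i,f_i)_{i\in\mathbb{N}}$, $S_i=\mathbb{T}$, $f_i(x)=p_ix\pmod 1$, where $(p_i)$ is a sequence of primes in which every prime occurs infinitely many times. *)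

theory Defs
  imports "HOL-Analysis.Analysis" "HOL-Computational_Algebra.Primes"
begin

text \<open>The circle group T = R/Z is represented by the reals in [0,1) (representatives
  via frac); the group operation is addition modulo 1.\<close>

definition tadd :: "real \<Rightarrow> real \<Rightarrow> real" where
  "tadd x y = frac (x + y)"

definition tneg :: "real \<Rightarrow> real" where
  "tneg x = frac (- x)"

definition dT :: "real \<Rightarrow> real \<Rightarrow> real" where
  "dT x y = min (frac (x - y)) (1 - frac (x - y))"

definition TN :: "(nat \<Rightarrow> real) set" where
  "TN = {x. \<forall>n. 0 \<le> x n \<and> x n < 1}"

definition TN_add :: "(nat \<Rightarrow> real) \<Rightarrow> (nat \<Rightarrow> real) \<Rightarrow> (nat \<Rightarrow> real)" where
  "TN_add x y = (\<lambda>n. tadd (x n) (y n))"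

definition TN_neg :: "(nat \<Rightarrow> real) \<Rightarrow> (nat \<Rightarrow> real)" where
  "TN_neg x = (\<lambda>n. tneg (x n))"

definition dTN :: "(nat \<Rightarrow> real) \<Rightarrow> (nat \<Rightarrow> real) \<Rightarrow> real" where
  "dTN x y = (\<Sum>n. dT (x n) (y n) / 2 ^ n)"

definition TN_top :: "(nat \<Rightarrow> real) topology" where
  "TN_top = Metric_space.mtopology TN dTN"

definition cc_subgroup :: "(nat \<Rightarrow> real) set \<Rightarrow> bool" where
  "cc_subgroup G \<longleftrightarrow> G \<noteq> {} \<and> G \<subseteq> TN
     \<and> (\<forall>x\<in>G. \<forall>y\<in>G. TN_add x y \<in> G) \<and> (\<forall>x\<in>G. TN_neg x \<in> G)
     \<and> compactin TN_top G \<and> connectedin TN_top G"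

definition hausd_TN :: "(nat \<Rightarrow> real) set \<Rightarrow> (nat \<Rightarrow> real) set \<Rightarrow> real" where
  "hausd_TN A B = max (SUP a\<in>A. INF b\<in>B. dTN a b) (SUP b\<in>B. INF a\<in>A. dTN a b)"

text \<open>Inverse limit of (S_i, f_i), S_i = T, f_i : S_(i+1) \<rightarrow> S_i, f_i(x) = p_i x mod 1,
  realised as a closed subgroup of T^N (with the subspace topology = inverse limit topology).\<close>
definition solenoid :: "(nat \<Rightarrow> nat) \<Rightarrow> (nat \<Rightarrow> real) set" where
  "solenoid p = {x \<in> TN. \<forall>i. frac (real (p i) * x (Suc i)) = x i}"

definition top_group_iso :: "(nat \<Rightarrow> real) set \<Rightarrow> (nat \<Rightarrow> real) set \<Rightarrow> bool" where
  "top_group_iso G H \<longleftrightarrow> (\<exists>\<phi>. bij_betw \<phi> G H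
     \<and> (\<forall>x\<in>G. \<forall>y\<in>G. \<phi> (TN_add x y) = TN_add (\<phi> x) (\<phi> y))
     \<and> homeomorphic_map (subtopology TN_top G) (subtopology TN_top H) \<phi>)"

end

theory Submission
  imports Defs
begin


section \<open>Circle distance\<close>

lemma dT_le_int: "dT a b \<le> \<bar>a - b - of_int k\<bar>"
proof -
  define x where "x = a - b"
  have fx: "frac x = x - of_int \<lfloor>x\<rfloor>" by (simp add: frac_def)
  have fl: "of_int \<lfloor>x\<rfloor> \<le> x" "x < of_int \<lfloor>x\<rfloor> + 1" by linarith+
  show ?thesis
  proof (cases "k \<le> \<lfloor>x\<rfloor>")
    case True
    then have "real_of_int k \<le> of_int \<lfloor>x\<rfloor>" by simp
    then have "frac x \<le> \<bar>x - of_int k\<bar>" using fx fl by linarith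
    then show ?thesis unfolding dT_def x_def by linarith
  next
    case False
    then have "real_of_int k \<ge> of_int \<lfloor>x\<rfloor> + 1" by linarith
    then have "1 - frac x \<le> \<bar>x - of_int k\<bar>" using fx fl by linarith
    then show ?thesis unfolding dT_def x_def by linarith
  qed
qed

lemma dT_ex_int: "\<exists>k. dT a b = \<bar>a - b - of_int k\<bar>"
proof -
  define x where "x = a - b"
  have fx: "frac x = x - of_int \<lfloor>x\<rfloor>" by (simp add: frac_def)
  have fl: "of_int \<lfloor>x\<rfloor> \<le> x" "x < of_int \<lfloor>x\<rfloor> + 1" by linarith+
  show ?thesis
  proof (cases "frac x \<le> 1 - frac x")
    case True
    then have "dT a b = \<bar>a - b - of_int \<lfloor>x\<rfloor>\<bar>" unfolding dT_def x_def[symmetric] using fx fl by auto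
    then show ?thesis by blast
  next
    case False
    then have "dT a b = \<bar>a - b - of_int (\<lfloor>x\<rfloor>+1)\<bar>" unfolding dT_def x_def[symmetric] using fx fl by auto
    then show ?thesis by blast
  qed
qed

lemma dT_nonneg: "0 \<le> dT a b"
  using dT_ex_int[of a b] by auto

lemma dT_le_half: "dT a b \<le> 1/2"
  unfolding dT_def by linarith

lemma dT_abs: "dT a b \<le> \<bar>a - b\<bar>"
  using dT_le_int[of a b 0] by simp

lemma dT_sym: "dT a b = dT b a"
proof -
  have "dT a b \<le> dT b a" if "True" for a b
  proof -
    obtain k where "dT b a = \<bar>b - a - of_int k\<bar>" using dT_ex_int by blast
    moreover have "dT a b \<le> \<bar>a - b - of_int (-k)\<bar>" by (rule dT_le_int)
    ultimately show ?thesis by simp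
  qed
  then show ?thesis by (meson antisym)
qed

lemma dT_triangle: "dT a c \<le> dT a b + dT b c"
proof -
  obtain k1 where k1: "dT a b = \<bar>a - b - of_int k1\<bar>" using dT_ex_int by blast
  obtain k2 where k2: "dT b c = \<bar>b - c - of_int k2\<bar>" using dT_ex_int by blast
  have "dT a c \<le> \<bar>a - c - of_int (k1+k2)\<bar>" by (rule dT_le_int)
  also have "\<dots> \<le> \<bar>a - b - of_int k1\<bar> + \<bar>b - c - of_int k2\<bar>" by simp
  finally show ?thesis using k1 k2 by simp
qed

lemma dT_add: "dT (a + c) (b + e) \<le> dT a b + dT c e"
proof -
  obtain k1 where k1: "dT a b = \<bar>a - b - of_int k1\<bar>" using dT_ex_int by blast
  obtain k2 where k2: "dT c e = \<bar>c - e - of_int k2\<bar>" using dT_ex_int by blast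
  have "dT (a+c) (b+e) \<le> \<bar>(a+c) - (b+e) - of_int (k1+k2)\<bar>" by (rule dT_le_int)
  also have "\<dots> \<le> \<bar>a - b - of_int k1\<bar> + \<bar>c - e - of_int k2\<bar>" by simp
  finally show ?thesis using k1 k2 by simp
qed

lemma dT_mult_int: "dT (of_int m * a) (of_int m * b) \<le> \<bar>of_int m\<bar> * dT a b"
proof -
  obtain k where k: "dT a b = \<bar>a - b - of_int k\<bar>" using dT_ex_int by blast
  have "dT (of_int m * a) (of_int m * b) \<le> \<bar>of_int m * a - of_int m * b - of_int (m*k)\<bar>" by (rule dT_le_int)
  also have "\<dots> = \<bar>of_int m\<bar> * \<bar>a - b - of_int k\<bar>"
    by (simp add: abs_mult[symmetric] algebra_simps)
  finally show ?thesis using k by simp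
qed

lemma dT_eq_shift: "a - b = c - e + of_int k \<Longrightarrow> dT a b = dT c e"
proof -
  have "dT a b \<le> dT c e" if "a - b = c - e + of_int k" for a b c e k
  proof -
    obtain j where j: "dT c e = \<bar>c - e - of_int j\<bar>" using dT_ex_int by blast
    have "dT a b \<le> \<bar>a - b - of_int (k + j)\<bar>" by (rule dT_le_int)
    then show ?thesis using j that by simp
  qed
  moreover assume "a - b = c - e + of_int k"
  ultimately show ?thesis
    by (metis antisym add_diff_cancel_right' diff_add_cancel diff_minus_eq_add of_int_minus)
qed

lemma dT_frac_left [simp]: "dT (frac a) b = dT a b"
  by (rule dT_eq_shift[of _ _ _ _ "- \<lfloor>a\<rfloor>"]) (simp add: frac_def)

lemma dT_frac_right [simp]: "dT a (frac b) = dT a b"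
  by (rule dT_eq_shift[of _ _ _ _ "\<lfloor>b\<rfloor>"]) (simp add: frac_def)

lemma dT_int_diff: "a - b = of_int k \<Longrightarrow> dT a b = 0"
  using dT_le_int[of a b k] dT_nonneg[of a b] by simp

lemma dT_self [simp]: "dT a a = 0"
  using dT_int_diff[of a a 0] by simp

lemma dT_zero_unit: "0 \<le> a \<Longrightarrow> a < 1 \<Longrightarrow> 0 \<le> b \<Longrightarrow> b < 1 \<Longrightarrow> dT a b = 0 \<Longrightarrow> a = b"
proof -
  assume h: "0 \<le> a" "a < 1" "0 \<le> b" "b < 1" "dT a b = 0"
  obtain k where k: "dT a b = \<bar>a - b - of_int k\<bar>" using dT_ex_int by blast
  then have "a - b = of_int k" using h by simp
  moreover have "-1 < a - b" "a - b < 1" using h by auto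
  ultimately have "real_of_int k < 1" "real_of_int k > -1" by auto
  then have "k < 1" "k > -1" by linarith+
  then have "k = 0" by simp
  then show "a = b" using \<open>a - b = of_int k\<close> by simp
qed

lemma dT_frac_eq: "frac a = frac b \<longleftrightarrow> dT a b = 0"
proof
  assume "frac a = frac b"
  then have "a - b = of_int (\<lfloor>a\<rfloor> - \<lfloor>b\<rfloor>)" by (simp add: frac_def)
  then show "dT a b = 0" by (rule dT_int_diff)
next
  assume "dT a b = 0"
  then show "frac a = frac b"
    using dT_zero_unit[of "frac a" "frac b"] by (simp add: frac_lt_1)
qed


section \<open>The metric on T^N\<close>

lemma dTN_term_le: fixes x y :: "nat \<Rightarrow> real" shows "dT (x n) (y n) / 2^n \<le> (1/2) * (1/2)^n"
proof -
  have "dT (x n) (y n) / 2^n \<le> (1/2) / 2^n"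
    by (rule divide_right_mono) (use dT_le_half[of "x n" "y n"] in auto)
  then show ?thesis by (simp add: power_one_over)
qed

lemma dTN_term_nonneg: fixes x y :: "nat \<Rightarrow> real" shows "0 \<le> dT (x n) (y n) / 2^n"
  by (simp add: dT_nonneg)

lemma summable_dTN: fixes x y :: "nat \<Rightarrow> real" shows "summable (\<lambda>n. dT (x n) (y n) / 2^n)"
proof (rule summable_comparison_test'[where N=0])
  show "summable (\<lambda>n. (1/2) * (1/2::real)^n)"
    by (intro summable_mult summable_geometric) simp
  show "norm (dT (x n) (y n) / 2^n) \<le> (1/2) * (1/2)^n" for n
    using dTN_term_le[of x n y] dTN_term_nonneg[of x n y] by simp
qed

lemma dTN_nonneg: "0 \<le> dTN x y"
  unfolding dTN_def by (intro suminf_nonneg summable_dTN dTN_term_nonneg)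

lemma dTN_sym: "dTN x y = dTN y x"
  unfolding dTN_def by (simp add: dT_sym)

lemma dTN_triangle: "dTN x z \<le> dTN x y + dTN y z"
proof -
  have "dTN x y + dTN y z = (\<Sum>n. dT (x n) (y n) / 2^n + dT (y n) (z n) / 2^n)"
    unfolding dTN_def by (intro suminf_add summable_dTN)
  moreover have "dTN x z \<le> (\<Sum>n. dT (x n) (y n) / 2^n + dT (y n) (z n) / 2^n)"
    unfolding dTN_def
  proof (rule suminf_le)
    show "dT (x n) (z n) / 2 ^ n \<le> dT (x n) (y n) / 2 ^ n + dT (y n) (z n) / 2 ^ n" for n
      using dT_triangle[of "x n" "z n" "y n"] by (simp add: add_divide_distrib[symmetric] divide_right_mono)
  qed (intro summable_dTN summable_add)+
  ultimately show ?thesis by simp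
qed

lemma dTN_coord: fixes x y :: "nat \<Rightarrow> real" shows "dT (x n) (y n) \<le> 2^n * dTN x y"
proof -
  have "dT (x n) (y n) / 2^n \<le> dTN x y"
    unfolding dTN_def using sum_le_suminf[OF summable_dTN, of "{n}"] dTN_term_nonneg by auto
  then show ?thesis by (simp add: field_simps)
qed

lemma dTN_zero: "x \<in> TN \<Longrightarrow> y \<in> TN \<Longrightarrow> dTN x y = 0 \<Longrightarrow> x = y"
proof
  fix n assume h: "x \<in> TN" "y \<in> TN" "dTN x y = 0"
  have "dT (x n) (y n) = 0" using dTN_coord[of x n y] h(3) dT_nonneg[of "x n" "y n"] by simp
  then show "x n = y n" using h(1,2) dT_zero_unit[of "x n" "y n"] by (auto simp: TN_def)
qed

lemma dTN_self [simp]: "dTN x x = 0"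
  by (simp add: dTN_def)

lemma Metric_space_TN: "Metric_space TN dTN"
  by (unfold_locales) (auto simp: dTN_nonneg dTN_sym dTN_triangle dTN_zero)

interpretation TNM: Metric_space TN dTN by (rule Metric_space_TN)

lemma TN_top_eq: "TN_top = TNM.mtopology"
  by (simp add: TN_top_def)

lemma dTN_tail_le: fixes x y :: "nat \<Rightarrow> real" shows "(\<Sum>n. dT (x (n+M)) (y (n+M)) / 2^(n+M)) \<le> (1/2)^M"
proof -
  have s: "summable (\<lambda>n. dT (x (n+M)) (y (n+M)) / 2^(n+M))"
    using summable_dTN[of x y] by (subst summable_iff_shift) 
  have g: "(\<lambda>n. ((1/2)^M/2) * (1/2::real)^n) sums (((1/2)^M/2) * (1 / (1 - 1/2)))"
    by (intro sums_mult geometric_sums) simp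
  have "(\<Sum>n. dT (x (n+M)) (y (n+M)) / 2^(n+M)) \<le> (\<Sum>n. ((1/2)^M/2) * (1/2::real)^n)"
  proof (rule suminf_le[OF _ s])
    show "dT (x (n+M)) (y (n+M)) / 2^(n+M) \<le> ((1/2)^M/2) * (1/2::real)^n" for n
      using dTN_term_le[of x "n+M" y]
      by (simp add: power_add power_one_over mult_ac)
    show "summable (\<lambda>n. ((1/2)^M/2) * (1/2::real)^n)" using g by (rule sums_summable)
  qed
  also have "\<dots> = (1/2)^M" using sums_unique[OF g] by simp
  finally show ?thesis .
qed

lemma dTN_split: fixes x y :: "nat \<Rightarrow> real" shows "dTN x y = (\<Sum>n<M. dT (x n) (y n) / 2^n) + (\<Sum>n. dT (x (n+M)) (y (n+M)) / 2^(n+M))"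
  unfolding dTN_def using suminf_split_initial_segment[OF summable_dTN, of x y M] by simp

lemma dTN_le_initial: fixes x y :: "nat \<Rightarrow> real" shows "dTN x y \<le> (\<Sum>n<M. dT (x n) (y n) / 2^n) + (1/2)^M"
  using dTN_split[of x y M] dTN_tail_le[of x M y] by simp

lemma dTN_le_initial': fixes x y :: "nat \<Rightarrow> real" shows "dTN x y \<le> (\<Sum>n<M. dT (x n) (y n)) + (1/2)^M"
proof -
  have "(\<Sum>n<M. dT (x n) (y n) / 2^n) \<le> (\<Sum>n<M. dT (x n) (y n))"
  proof (rule sum_mono)
    fix n show "dT (x n) (y n) / 2^n \<le> dT (x n) (y n)"
      using dT_nonneg[of "x n" "y n"] mult_left_mono[of 1 "2^n" "dT (x n) (y n)"]
      by (simp add: divide_le_eq)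
  qed
  then show ?thesis using dTN_le_initial[of x y M] by simp
qed

lemma dTN_shift: fixes x y :: "nat \<Rightarrow> real" shows "(\<Sum>n. dT (x (n+M)) (y (n+M)) / 2^(n+M)) = (1/2)^M * dTN (\<lambda>n. x (n+M)) (\<lambda>n. y (n+M))"
  unfolding dTN_def
  by (subst suminf_mult[OF summable_dTN, symmetric]) (simp add: power_add power_one_over mult_ac)

lemma dTN_shift_le: fixes x y :: "nat \<Rightarrow> real" shows "dTN (\<lambda>n. x (n+M)) (\<lambda>n. y (n+M)) \<le> 2^M * dTN x y"
proof -
  have "0 \<le> (\<Sum>n<M. dT (x n) (y n) / 2^n)" by (intro sum_nonneg dTN_term_nonneg)
  then have "(1/2)^M * dTN (\<lambda>n. x (n+M)) (\<lambda>n. y (n+M)) \<le> dTN x y"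
    using dTN_split[of x y M] dTN_shift[of x M y] by simp
  then show ?thesis by (simp add: power_one_over field_simps)
qed


section \<open>Topology of TN\<close>

lemma half_pow_small: "(e::real) > 0 \<Longrightarrow> \<exists>M. (1/2::real)^M < e"
  by (rule real_arch_pow_inv) auto

lemma sub_top: "S \<subseteq> TN \<Longrightarrow> subtopology TN_top S = Metric_space.mtopology S dTN"
proof -
  assume "S \<subseteq> TN"
  then interpret Submetric TN dTN S by unfold_locales
  show ?thesis using mtopology_submetric by (simp add: TN_top_def)
qed

lemma Metric_space_sub: "S \<subseteq> TN \<Longrightarrow> Metric_space S dTN"
  using TNM.subspace by blast

lemma lip_cont:
  assumes "S \<subseteq> TN" "T \<subseteq> TN" "f ` S \<subseteq> T"
    and L: "\<And>x y. x \<in> S \<Longrightarrow> y \<in> S \<Longrightarrow> dTN (f x) (f y) \<le> C * dTN x y"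
  shows "continuous_map (subtopology TN_top S) (subtopology TN_top T) f"
proof -
  interpret MS: Metric_space S dTN using assms(1) by (rule Metric_space_sub)
  have "continuous_map MS.mtopology (Metric_space.mtopology T dTN) f"
    unfolding MS.metric_continuous_map[OF Metric_space_sub[OF assms(2)]]
  proof (intro conjI ballI allI impI assms(3))
    fix a and e :: real assume "a \<in> S" "0 < e"
    show "\<exists>\<delta>>0. \<forall>x. x \<in> S \<and> dTN a x < \<delta> \<longrightarrow> dTN (f a) (f x) < e"
    proof (intro exI[of _ "e / (\<bar>C\<bar> + 1)"] conjI allI impI)
      show "0 < e / (\<bar>C\<bar> + 1)" using \<open>0 < e\<close> by simp
      fix x assume x: "x \<in> S \<and> dTN a x < e / (\<bar>C\<bar> + 1)"
      have "dTN (f a) (f x) \<le> C * dTN a x" using L \<open>a \<in> S\<close> x by blast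
      also have "\<dots> \<le> \<bar>C\<bar> * dTN a x" using dTN_nonneg[of a x] by (simp add: mult_right_mono)
      also have "\<dots> \<le> (\<bar>C\<bar> + 1) * dTN a x" using dTN_nonneg[of a x] by (simp add: mult_right_mono)
      also have "\<dots> < (\<bar>C\<bar> + 1) * (e / (\<bar>C\<bar> + 1))"
        using x by (intro mult_strict_left_mono) auto
      also have "\<dots> = e" by simp
      finally show "dTN (f a) (f x) < e" .
    qed
  qed
  then show ?thesis using sub_top assms(1,2) by simp
qed

lemma lip_cont_real:
  assumes "range f \<subseteq> TN"
    and L: "\<And>x y. dTN (f x) (f y) \<le> C * \<bar>x - y\<bar>"
  shows "continuous_map euclideanreal TN_top f"
proof -
  have "continuous_map Met_TC.mtopology TNM.mtopology f"
    unfolding Met_TC.metric_continuous_map[OF Metric_space_TN]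
  proof (intro conjI ballI allI impI)
    show "f ` UNIV \<subseteq> TN" using assms(1) by simp
    fix a and e :: real assume "0 < e"
    show "\<exists>\<delta>>0. \<forall>x. x \<in> UNIV \<and> dist a x < \<delta> \<longrightarrow> dTN (f a) (f x) < e"
    proof (intro exI[of _ "e / (\<bar>C\<bar> + 1)"] conjI allI impI)
      show "0 < e / (\<bar>C\<bar> + 1)" using \<open>0 < e\<close> by simp
      fix x assume x: "x \<in> UNIV \<and> dist a x < e / (\<bar>C\<bar> + 1)"
      have "dTN (f a) (f x) \<le> C * \<bar>a - x\<bar>" using L by blast
      also have "\<dots> \<le> (\<bar>C\<bar> + 1) * \<bar>a - x\<bar>" by (simp add: mult_right_mono)
      also have "\<dots> < (\<bar>C\<bar> + 1) * (e / (\<bar>C\<bar> + 1))"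
        using x by (intro mult_strict_left_mono) (auto simp: dist_real_def)
      also have "\<dots> = e" by simp
      finally show "dTN (f a) (f x) < e" .
    qed
  qed
  then show ?thesis by (simp add: TN_top_def)
qed

lemma frac_in_TN [simp]: "(\<lambda>n. frac (x n)) \<in> TN"
  by (simp add: TN_def frac_lt_1)

lemma compact_TN: "compact_space TN_top"
proof -
  define P where "P = product_topology (\<lambda>_::nat. top_of_set {0..1::real}) UNIV"
  define F where "F = (\<lambda>(x::nat\<Rightarrow>real) n. frac (x n))"
  have cP: "compact_space P"
    unfolding P_def compact_space_product_topology
    by (auto intro: compact_space_subtopology)
  have proj: "continuous_map P euclideanreal (\<lambda>y. y n)" for n
    unfolding P_def
    by (rule continuous_map_into_fulltopology, rule continuous_map_product_projection) simp
  have cF: "continuous_map P TN_top F"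
    unfolding TN_top_def TNM.continuous_map_to_metric
  proof (intro ballI allI impI)
    fix x and e :: real assume x: "x \<in> topspace P" and e: "0 < e"
    obtain M where M: "(1/2::real)^M < e/2" using half_pow_small[of "e/2"] e by auto
    define U where "U = {y \<in> topspace P. (\<lambda>y. \<Sum>n<M. \<bar>y n - x n\<bar>) y \<in> {..<e/2}}"
    have "continuous_map P euclideanreal (\<lambda>y. \<Sum>n<M. \<bar>y n - x n\<bar>)"
      by (intro continuous_map_sum continuous_map_real_abs continuous_map_diff proj) auto
    then have "openin P U" unfolding U_def
      by (rule openin_continuous_map_preimage) simp
    moreover have "x \<in> U" using x e by (simp add: U_def)
    moreover have "F y \<in> TNM.mball (F x) e" if "y \<in> U" for y
    proof -
      have "dTN (F x) (F y) \<le> (\<Sum>n<M. dT (F x n) (F y n)) + (1/2)^M" by (rule dTN_le_initial')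
      also have "(\<Sum>n<M. dT (F x n) (F y n)) \<le> (\<Sum>n<M. \<bar>y n - x n\<bar>)"
        by (intro sum_mono) (simp add: F_def dT_abs[THEN order_trans] abs_minus_commute)
      finally have "dTN (F x) (F y) < e" using that M by (simp add: U_def)
      then show ?thesis by (simp add: F_def)
    qed
    ultimately show "\<exists>U. openin P U \<and> x \<in> U \<and> (\<forall>y\<in>U. F y \<in> TNM.mball (F x) e)" by blast
  qed
  have "F ` topspace P = TN"
  proof
    show "F ` topspace P \<subseteq> TN" by (auto simp: F_def)
    show "TN \<subseteq> F ` topspace P"
    proof
      fix x assume "x \<in> TN"
      then have "x \<in> topspace P" "F x = x"
        by (auto simp: P_def TN_def F_def frac_eq less_imp_le)
      then show "x \<in> F ` topspace P" by (metis image_eqI)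
    qed
  qed
  moreover have "compactin TN_top (F ` topspace P)"
    using image_compactin[OF cP[unfolded compact_space_def] cF] .
  ultimately show ?thesis by (simp add: compact_space_def TN_top_def)
qed

lemma closed_compact_TN: "closedin TN_top S \<Longrightarrow> compactin TN_top S"
  using compact_TN closedin_subset by (metis closed_compactin compact_space_def)


lemma frac_eq_intdiff: fixes a b :: real shows "a - b = of_int k \<Longrightarrow> frac a = frac b"
  using dT_frac_eq dT_int_diff by blast

lemma frac_frac [simp]: "frac (frac a) = frac a"
  by (simp add: frac_eq frac_lt_1)

lemma frac_add_frac_left: fixes a b :: real shows "frac (frac a + b) = frac (a + b)"
  by (rule frac_eq_intdiff[of _ _ "- \<lfloor>a\<rfloor>"]) (simp add: frac_def)

lemma frac_add_frac_right: fixes a b :: real shows "frac (a + frac b) = frac (a + b)"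
  by (rule frac_eq_intdiff[of _ _ "- \<lfloor>b\<rfloor>"]) (simp add: frac_def)

lemma frac_mult_frac_int: fixes x :: real shows "frac (of_int k * frac x) = frac (of_int k * x)"
  by (rule frac_eq_intdiff[of _ _ "- k * \<lfloor>x\<rfloor>"]) (simp add: frac_def algebra_simps)

lemma frac_mult_frac_nat: "frac (real m * frac x) = frac (real m * x)"
  using frac_mult_frac_int[of "int m" x] by simp

lemma frac_neg_frac: fixes a b :: real shows "frac (- frac a) = frac (- a)"
  by (rule frac_eq_intdiff[of _ _ "\<lfloor>a\<rfloor>"]) (simp add: frac_def)

lemma tadd_frac: "tadd (frac a) (frac b) = frac (a + b)"
  by (simp add: tadd_def frac_add_frac_left frac_add_frac_right)

lemma tneg_frac: "tneg (frac a) = frac (- a)"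
  by (simp add: tneg_def frac_neg_frac)

lemma TN_frac_id: "x \<in> TN \<Longrightarrow> frac (x n) = x n"
  by (simp add: TN_def frac_eq less_imp_le)

section \<open>The solenoid\<close>

definition Pp :: "(nat \<Rightarrow> nat) \<Rightarrow> nat \<Rightarrow> nat" where
  "Pp p i = (\<Prod>j\<in>{0..<i}. p j)"

definition gam :: "(nat \<Rightarrow> nat) \<Rightarrow> real \<Rightarrow> nat \<Rightarrow> real" where
  "gam p t = (\<lambda>i. frac (t / real (Pp p i)))"

lemma Pp_pos: "\<forall>i. p i > 0 \<Longrightarrow> Pp p i > 0"
  by (simp add: Pp_def)

lemma Pp_split: "i \<le> M \<Longrightarrow> Pp p M = Pp p i * (\<Prod>j\<in>{i..<M}. p j)"
  unfolding Pp_def by (simp add: prod.atLeastLessThan_concat)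

lemma Pp_Suc: "Pp p (Suc i) = Pp p i * p i"
  by (simp add: Pp_def)

lemma gam_in_TN [simp]: "gam p t \<in> TN"
  by (simp add: gam_def TN_def frac_lt_1)

lemma gam_0 [simp]: "gam p t 0 = frac t"
  by (simp add: gam_def Pp_def)

lemma gam_in_sol:
  assumes "\<forall>i. p i > 0"
  shows "gam p t \<in> solenoid p"
proof -
  have "frac (real (p i) * gam p t (Suc i)) = gam p t i" for i
  proof -
    have "frac (real (p i) * gam p t (Suc i)) = frac (real (p i) * (t / real (Pp p (Suc i))))"
      by (simp add: gam_def frac_mult_frac_nat)
    also have "real (p i) * (t / real (Pp p (Suc i))) = t / real (Pp p i)"
      using assms Pp_pos[OF assms, of i] by (simp add: Pp_Suc field_simps)
    finally show ?thesis by (simp add: gam_def)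
  qed
  then show ?thesis by (simp add: solenoid_def)
qed

lemma sol_TN: "solenoid p \<subseteq> TN"
  by (auto simp: solenoid_def)

lemma sol_back:
  assumes "s \<in> solenoid p"
  shows "s i = frac (real (\<Prod>j\<in>{i..<i+d}. p j) * s (i+d))"
proof (induction d)
  case 0
  then show ?case using assms by (simp add: solenoid_def TN_frac_id)
next
  case (Suc d)
  have e: "s (i+d) = frac (real (p (i+d)) * s (Suc (i+d)))"
    using assms by (simp add: solenoid_def)
  have "s i = frac (real (\<Prod>j\<in>{i..<i+d}. p j) * s (i+d))" by (rule Suc.IH)
  also have "\<dots> = frac (real (\<Prod>j\<in>{i..<i+d}. p j) * frac (real (p (i+d)) * s (Suc (i+d))))"
    by (simp only: e)
  also have "\<dots> = frac (real (\<Prod>j\<in>{i..<i+d}. p j) * (real (p (i+d)) * s (Suc (i+d))))"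
    by (rule frac_mult_frac_nat)
  also have "real (\<Prod>j\<in>{i..<i+d}. p j) * (real (p (i+d)) * s (Suc (i+d)))
      = real (\<Prod>j\<in>{i..<i + Suc d}. p j) * s (i + Suc d)"
    by (simp add: prod.atLeastLessThan_Suc)
  finally show ?case .
qed

lemma gam_lip:
  assumes "\<forall>i. p i > 0"
  shows "dTN (gam p a) (gam p b) \<le> 2 * \<bar>a - b\<bar>"
proof -
  have g: "(\<lambda>n. \<bar>a - b\<bar> * (1/2::real)^n) sums (\<bar>a - b\<bar> * (1 / (1 - 1/2)))"
    by (intro sums_mult geometric_sums) simp
  have "dTN (gam p a) (gam p b) \<le> (\<Sum>n. \<bar>a - b\<bar> * (1/2::real)^n)"
    unfolding dTN_def
  proof (rule suminf_le)
    fix n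
    have P1: "real (Pp p n) \<ge> 1" using Pp_pos[OF assms, of n] by simp
    have "dT (gam p a n) (gam p b n) \<le> \<bar>a / real (Pp p n) - b / real (Pp p n)\<bar>"
      by (simp add: gam_def dT_abs)
    also have "\<dots> = \<bar>a - b\<bar> / real (Pp p n)" using P1 by (simp add: diff_divide_distrib[symmetric])
    also have "\<dots> \<le> \<bar>a - b\<bar>" using P1 by (simp add: divide_le_eq mult_le_cancel_left1 mult_left_mono[of 1, simplified])
    finally have "dT (gam p a n) (gam p b n) \<le> \<bar>a - b\<bar>" .
    then show "dT (gam p a n) (gam p b n) / 2 ^ n \<le> \<bar>a - b\<bar> * (1/2)^n"
      by (simp add: power_one_over divide_right_mono)
  qed (use summable_dTN g sums_summable in auto)
  also have "\<dots> = 2 * \<bar>a - b\<bar>" using sums_unique[OF g] by simp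
  finally show ?thesis .
qed

lemma gam_cont: "\<forall>i. p i > 0 \<Longrightarrow> continuous_map euclideanreal TN_top (gam p)"
  by (rule lip_cont_real[where C=2]) (auto intro: gam_lip)

lemma sol_closed:
  assumes "\<forall>i. p i > 0"
  shows "closedin TN_top (solenoid p)"
  unfolding TN_top_def TNM.closedin_metric
proof (intro conjI allI impI sol_TN)
  fix x assume x: "x \<in> TN - solenoid p"
  then obtain i where i: "frac (real (p i) * x (Suc i)) \<noteq> x i"
    by (auto simp: solenoid_def)
  define eta where "eta = dT (real (p i) * x (Suc i)) (x i)"
  have "eta \<noteq> 0" using i dT_frac_eq[of "real (p i) * x (Suc i)" "x i"] x
    by (auto simp: eta_def TN_frac_id)
  then have eta: "eta > 0" using dT_nonneg by (simp add: eta_def order_less_le)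
  define r where "r = eta / (2^i + real (p i) * 2^(Suc i))"
  have rpos: "r > 0" using eta by (simp add: r_def add_pos_nonneg)
  show "\<exists>r>0. disjnt (solenoid p) (TNM.mball x r)"
  proof (intro exI[of _ r] conjI rpos)
    show "disjnt (solenoid p) (TNM.mball x r)"
      unfolding disjnt_iff
    proof (intro allI notI)
      fix y assume "y \<in> solenoid p \<and> y \<in> TNM.mball x r"
      then have y: "y \<in> solenoid p" "y \<in> TNM.mball x r" by auto
      then have dxy: "dTN x y < r" by simp
      have yi: "y i = frac (real (p i) * y (Suc i))" using y by (simp add: solenoid_def)
      have A0: "eta \<le> dT (real (p i) * x (Suc i)) (real (p i) * y (Suc i)) + dT (real (p i) * y (Suc i)) (x i)"
        unfolding eta_def by (rule dT_triangle)
      have A1: "dT (real (p i) * y (Suc i)) (x i) = dT (y i) (x i)"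
        using yi by simp
      have B0: "dT (real (p i) * x (Suc i)) (real (p i) * y (Suc i)) \<le> real (p i) * dT (x (Suc i)) (y (Suc i))"
        using dT_mult_int[of "int (p i)" "x (Suc i)" "y (Suc i)"] by simp
      have B1: "dT (x (Suc i)) (y (Suc i)) \<le> 2^(Suc i) * dTN x y" by (rule dTN_coord)
      have B2: "real (p i) * dT (x (Suc i)) (y (Suc i)) \<le> real (p i) * (2^(Suc i) * dTN x y)"
        using B1 by (rule mult_left_mono) simp
      have C0: "dT (y i) (x i) \<le> 2^i * dTN x y" using dTN_coord[of x i y] by (simp add: dT_sym)
      have E: "(2^i + real (p i) * 2^(Suc i)) * dTN x y = 2^i * dTN x y + real (p i) * (2^(Suc i) * dTN x y)"
        by (simp add: algebra_simps)
      have "eta \<le> (2^i + real (p i) * 2^(Suc i)) * dTN x y"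
        using A0 A1 B0 B2 C0 E by linarith
      also have "\<dots> < (2^i + real (p i) * 2^(Suc i)) * r"
        using dxy by (intro mult_strict_left_mono) (auto simp: add_pos_nonneg)
      also have "\<dots> = eta"
      proof -
        have "(2^i + real (p i) * 2^(Suc i)) > (0::real)" by (simp add: add_pos_nonneg)
        then show ?thesis by (simp add: r_def)
      qed
      finally show False by simp
    qed
  qed
qed

lemma sol_closure:
  assumes "\<forall>i. p i > 0"
  shows "solenoid p = TN_top closure_of (range (gam p))"
proof
  have "range (gam p) \<subseteq> solenoid p" using gam_in_sol[OF assms] by auto
  then show "TN_top closure_of (range (gam p)) \<subseteq> solenoid p"
    using sol_closed[OF assms] by (simp add: closure_of_minimal)
  show "solenoid p \<subseteq> TN_top closure_of (range (gam p))"
    unfolding TN_top_def TNM.metric_closure_of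
  proof (intro subsetI CollectI conjI allI impI)
    fix s assume s: "s \<in> solenoid p"
    then show "s \<in> TN" using sol_TN by auto
    fix r :: real assume "r > 0"
    then obtain M where M: "(1/2::real)^M < r" using half_pow_small by blast
    define t where "t = real (Pp p M) * s M"
    have eq: "gam p t i = s i" if "i < M" for i
    proof -
      obtain d where d: "M = i + d" using \<open>i < M\<close> by (metis less_imp_add_positive)
      have "t / real (Pp p i) = real (\<Prod>j\<in>{i..<i+d}. p j) * s (i+d)"
        using Pp_split[of i M p] d Pp_pos[OF assms, of i] by (simp add: t_def field_simps)
      then show ?thesis using sol_back[OF s, of i d] by (simp add: gam_def)
    qed
    have "dTN s (gam p t) \<le> (\<Sum>n<M. dT (s n) (gam p t n) / 2^n) + (1/2)^M" by (rule dTN_le_initial)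
    also have "(\<Sum>n<M. dT (s n) (gam p t n) / 2^n) = 0" using eq by simp
    finally have "dTN s (gam p t) < r" using M by simp
    then show "\<exists>y\<in>range (gam p). y \<in> TNM.mball s r" using s sol_TN by auto
  qed
qed

lemma sol_connected: "\<forall>i. p i > 0 \<Longrightarrow> connectedin TN_top (solenoid p)"
proof -
  assume a: "\<forall>i. p i > 0"
  have "connectedin euclideanreal UNIV" by (simp add: connectedin_iff_connected)
  then have "connectedin TN_top (range (gam p))"
    by (rule connectedin_continuous_map_image[OF gam_cont[OF a]])
  then show ?thesis using sol_closure[OF a] connectedin_closure_of by metis
qed

lemma sol_compact: "\<forall>i. p i > 0 \<Longrightarrow> compactin TN_top (solenoid p)"
  by (intro closed_compact_TN sol_closed)

lemma sol_add:
  assumes "x \<in> solenoid p" "y \<in> solenoid p"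
  shows "TN_add x y \<in> solenoid p"
proof -
  have "frac (real (p i) * tadd (x (Suc i)) (y (Suc i))) = tadd (x i) (y i)" for i
  proof -
    have "frac (real (p i) * tadd (x (Suc i)) (y (Suc i))) = frac (real (p i) * x (Suc i) + real (p i) * y (Suc i))"
      by (simp add: tadd_def frac_mult_frac_nat distrib_left)
    also have "\<dots> = tadd (frac (real (p i) * x (Suc i))) (frac (real (p i) * y (Suc i)))"
      by (simp add: tadd_frac)
    finally show ?thesis using assms by (simp add: solenoid_def)
  qed
  moreover have "TN_add x y \<in> TN" by (simp add: TN_add_def tadd_def TN_def frac_lt_1)
  ultimately show ?thesis by (simp add: solenoid_def TN_add_def)
qed

lemma sol_neg:
  assumes "x \<in> solenoid p"
  shows "TN_neg x \<in> solenoid p"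
proof -
  have "frac (real (p i) * tneg (x (Suc i))) = tneg (x i)" for i
  proof -
    have "frac (real (p i) * tneg (x (Suc i))) = frac (- (real (p i) * x (Suc i)))"
      by (simp add: tneg_def frac_mult_frac_nat)
    also have "\<dots> = tneg (frac (real (p i) * x (Suc i)))"
      by (simp add: tneg_frac)
    finally show ?thesis using assms by (simp add: solenoid_def)
  qed
  moreover have "TN_neg x \<in> TN" by (simp add: TN_neg_def tneg_def TN_def frac_lt_1)
  ultimately show ?thesis by (simp add: solenoid_def TN_neg_def)
qed


section \<open>The projected group K\<close>

definition nN :: "nat \<Rightarrow> (nat \<Rightarrow> real) \<Rightarrow> real" where
  "nN N y = (\<Sum>n<N. \<bar>y n\<bar>)"

lemma nN_nonneg: "0 \<le> nN N y" by (simp add: nN_def sum_nonneg)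

lemma nN_coord: "n < N \<Longrightarrow> \<bar>y n\<bar> \<le> nN N y"
  unfolding nN_def by (rule member_le_sum) auto

lemma nN_triangle: "nN N (\<lambda>n. y n + z n) \<le> nN N y + nN N z"
  unfolding nN_def by (simp add: sum.distrib[symmetric] sum_mono abs_triangle_ineq)

lemma nN_diff_triangle: "nN N (\<lambda>n. y n - z n) \<le> nN N (\<lambda>n. y n - u n) + nN N (\<lambda>n. u n - z n)"
  using nN_triangle[of N "\<lambda>n. y n - u n" "\<lambda>n. u n - z n"] by simp

lemma nN_scale: "nN N (\<lambda>n. c * y n) = \<bar>c\<bar> * nN N y"
  unfolding nN_def by (simp add: abs_mult sum_distrib_left)

lemma nN_minus: "nN N (\<lambda>n. - y n) = nN N y"
  unfolding nN_def by simp

lemma nN_sym: "nN N (\<lambda>n. y n - z n) = nN N (\<lambda>n. z n - y n)"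
  unfolding nN_def by (simp add: abs_minus_commute)

lemma nN_zero [simp]: "nN N (\<lambda>n. 0) = 0" by (simp add: nN_def)

lemma nN_tendsto:
  assumes "\<And>n. n < N \<Longrightarrow> (\<lambda>k. X k n) \<longlonglongrightarrow> x n"
  shows "(\<lambda>k. nN N (\<lambda>n. X k n - x n)) \<longlonglongrightarrow> 0"
proof -
  have "(\<lambda>k. \<Sum>n<N. \<bar>X k n - x n\<bar>) \<longlonglongrightarrow> (\<Sum>n<N. \<bar>x n - x n\<bar>)"
    by (intro tendsto_sum tendsto_rabs tendsto_diff assms tendsto_const) simp
  then show ?thesis by (simp add: nN_def)
qed

locale ccG =
  fixes G :: "(nat \<Rightarrow> real) set" and N :: nat
  assumes cc: "cc_subgroup G"
begin

definition inK :: "(nat \<Rightarrow> real) \<Rightarrow> bool" where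
  "inK y \<longleftrightarrow> (\<exists>g\<in>G. \<forall>n<N. g n = frac (y n))"

definition W :: "(nat \<Rightarrow> real) set" where
  "W = {w. \<forall>t. inK (\<lambda>n. t * w n)}"

lemma G_TN: "G \<subseteq> TN" using cc by (simp add: cc_subgroup_def)
lemma G_ne: "G \<noteq> {}" using cc by (simp add: cc_subgroup_def)
lemma G_add: "x \<in> G \<Longrightarrow> y \<in> G \<Longrightarrow> TN_add x y \<in> G" using cc by (simp add: cc_subgroup_def)
lemma G_neg: "x \<in> G \<Longrightarrow> TN_neg x \<in> G" using cc by (simp add: cc_subgroup_def)
lemma G_compact: "compactin TN_top G" using cc by (simp add: cc_subgroup_def)
lemma G_connected: "connectedin TN_top G" using cc by (simp add: cc_subgroup_def)

lemma G_zero: "(\<lambda>n. 0) \<in> G"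
proof -
  obtain g where g: "g \<in> G" using G_ne by auto
  have "TN_add g (TN_neg g) \<in> G" using g by (intro G_add G_neg)
  moreover have "TN_add g (TN_neg g) = (\<lambda>n. 0)"
    by (rule ext) (simp add: TN_add_def TN_neg_def tadd_def tneg_def frac_add_frac_right)
  ultimately show ?thesis by simp
qed

lemma G_diff: "x \<in> G \<Longrightarrow> y \<in> G \<Longrightarrow> TN_add x (TN_neg y) \<in> G"
  by (intro G_add G_neg)

lemma inK_zero: "inK (\<lambda>n. 0)"
  unfolding inK_def using G_zero by force

lemma inK_cong: "inK y \<Longrightarrow> (\<And>n. n < N \<Longrightarrow> frac (y n) = frac (z n)) \<Longrightarrow> inK z"
  unfolding inK_def by metis

lemma inK_add: "inK y \<Longrightarrow> inK z \<Longrightarrow> inK (\<lambda>n. y n + z n)"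
proof -
  assume "inK y" "inK z"
  then obtain g h where g: "g \<in> G" "\<forall>n<N. g n = frac (y n)" and h: "h \<in> G" "\<forall>n<N. h n = frac (z n)"
    unfolding inK_def by blast
  have "TN_add g h \<in> G" using g h by (intro G_add) auto
  moreover have "\<forall>n<N. TN_add g h n = frac (y n + z n)"
    using g h by (simp add: TN_add_def tadd_frac)
  ultimately show ?thesis unfolding inK_def by blast
qed

lemma inK_neg: "inK y \<Longrightarrow> inK (\<lambda>n. - y n)"
proof -
  assume "inK y"
  then obtain g where g: "g \<in> G" "\<forall>n<N. g n = frac (y n)" unfolding inK_def by blast
  have "TN_neg g \<in> G" using g by (intro G_neg) auto
  moreover have "\<forall>n<N. TN_neg g n = frac (- y n)"
    using g by (simp add: TN_neg_def tneg_frac)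
  ultimately show ?thesis unfolding inK_def by blast
qed

lemma inK_diff: "inK y \<Longrightarrow> inK z \<Longrightarrow> inK (\<lambda>n. y n - z n)"
  using inK_add[OF _ inK_neg[of z], of y] by simp

lemma inK_nat_mult: "inK y \<Longrightarrow> inK (\<lambda>n. real m * y n)"
proof (induction m)
  case 0 then show ?case using inK_zero by simp
next
  case (Suc m)
  then have "inK (\<lambda>n. real m * y n + y n)" by (intro inK_add)
  then show ?case by (simp add: algebra_simps)
qed

lemma inK_int_mult: "inK y \<Longrightarrow> inK (\<lambda>n. real_of_int m * y n)"
proof (cases "m \<ge> 0")
  case True
  assume "inK y"
  then have "inK (\<lambda>n. real (nat m) * y n)" by (rule inK_nat_mult)
  then show ?thesis using True by simp
next
  case False
  assume "inK y"
  then have "inK (\<lambda>n. - (real (nat (-m)) * y n))" by (intro inK_neg inK_nat_mult)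
  then show ?thesis using False by simp
qed

lemma inK_closed:
  assumes Y: "\<And>k. inK (Y k)" and lim: "\<And>n. n < N \<Longrightarrow> (\<lambda>k. Y k n) \<longlonglongrightarrow> y n"
  shows "inK y"
proof -
  have "\<forall>k. \<exists>g\<in>G. \<forall>n<N. g n = frac (Y k n)" using Y unfolding inK_def by blast
  then obtain g where g: "\<And>k. g k \<in> G" "\<And>k n. n < N \<Longrightarrow> g k n = frac (Y k n)" by metis
  obtain l r where l: "l \<in> G" "strict_mono r" "limitin TNM.mtopology (g \<circ> r) l sequentially"
    using G_compact[unfolded TN_top_def TNM.compactin_sequentially] g(1) by blast
  have lTN: "l \<in> TN" using l(1) G_TN by auto
  have "l n = frac (y n)" if n: "n < N" for n
  proof -
    have "dT (l n) (y n) \<le> 0 + e" if e: "e > 0" for e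
    proof -
      obtain K1 where K1: "\<forall>k\<ge>K1. dTN ((g \<circ> r) k) l < e / 2 / 2^n"
        using l(3)[unfolded TNM.limit_metric_sequentially] e by (meson divide_pos_pos zero_less_power zero_less_numeral half_gt_zero)
      have "(\<lambda>k. Y (r k) n) \<longlonglongrightarrow> y n"
        using LIMSEQ_subseq_LIMSEQ[OF lim[OF n] l(2)] by (simp add: o_def)
      then obtain K2 where K2: "\<forall>k\<ge>K2. norm (Y (r k) n - y n) < e / 2"
        using e unfolding LIMSEQ_iff by (meson half_gt_zero)
      define k where "k = max K1 K2"
      have a: "dTN (g (r k)) l < e / 2 / 2^n" using K1 by (simp add: k_def)
      have b: "\<bar>Y (r k) n - y n\<bar> < e / 2" using K2 by (simp add: k_def)
      have "dT (l n) (y n) \<le> dT (l n) (g (r k) n) + dT (g (r k) n) (y n)" by (rule dT_triangle)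
      also have "dT (l n) (g (r k) n) \<le> 2^n * dTN (g (r k)) l" using dTN_coord[of "g (r k)" n l] by (simp add: dT_sym)
      also have "dT (g (r k) n) (y n) \<le> \<bar>Y (r k) n - y n\<bar>" using g(2)[OF n] dT_abs by simp
      finally have "dT (l n) (y n) \<le> 2^n * dTN (g (r k)) l + \<bar>Y (r k) n - y n\<bar>" by simp
      moreover have "2^n * dTN (g (r k)) l < e / 2" using a by (simp add: field_simps)
      ultimately show ?thesis using b by simp
    qed
    then have "dT (l n) (y n) \<le> 0" by (rule field_le_epsilon)
    then have "frac (l n) = frac (y n)" using dT_nonneg dT_frac_eq by (metis order_antisym)
    then show ?thesis using TN_frac_id[OF lTN] by simp
  qed
  then show ?thesis using l(1) unfolding inK_def by blast
qed

lemma W_zero: "(\<lambda>n. 0) \<in> W"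
  unfolding W_def using inK_zero by simp

lemma W_inK: "w \<in> W \<Longrightarrow> inK w"
  unfolding W_def by (metis (no_types) mem_Collect_eq mult_1 ext)

lemma W_add: "v \<in> W \<Longrightarrow> w \<in> W \<Longrightarrow> (\<lambda>n. v n + w n) \<in> W"
  unfolding W_def using inK_add by (simp add: distrib_left)

lemma W_scale: "w \<in> W \<Longrightarrow> (\<lambda>n. c * w n) \<in> W"
  unfolding W_def by (simp add: mult.assoc[symmetric])

lemma W_neg: "w \<in> W \<Longrightarrow> (\<lambda>n. - w n) \<in> W"
  using W_scale[of w "-1"] by simp

lemma W_diff: "v \<in> W \<Longrightarrow> w \<in> W \<Longrightarrow> (\<lambda>n. v n - w n) \<in> W"
  using W_add[OF _ W_neg[of w], of v] by simp

lemma W_closed: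
  assumes "\<And>k. X k \<in> W" "\<And>n. n < N \<Longrightarrow> (\<lambda>k. X k n) \<longlonglongrightarrow> y n"
  shows "y \<in> W"
  unfolding W_def
proof (intro CollectI allI)
  fix t
  show "inK (\<lambda>n. t * y n)"
    by (rule inK_closed[where Y="\<lambda>k n. t * X k n"])
       (use assms in \<open>auto simp: W_def intro: tendsto_mult_left\<close>)
qed

end


lemma tendsto_by_bound:
  fixes f :: "nat \<Rightarrow> real"
  assumes "\<And>k. \<bar>f k - l\<bar> \<le> c / (real k + 1)"
  shows "f \<longlonglongrightarrow> l"
proof -
  have g: "(\<lambda>k. c * inverse (real (Suc k))) \<longlonglongrightarrow> c * 0"
    by (intro tendsto_mult tendsto_const LIMSEQ_inverse_real_of_nat)
  have "(\<lambda>k. f k - l) \<longlonglongrightarrow> 0"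
    by (rule Lim_null_comparison[OF _ g[simplified]])
       (use assms in \<open>auto simp: divide_inverse add.commute\<close>)
  then have "(\<lambda>k. f k - l + l) \<longlonglongrightarrow> 0 + l" by (intro tendsto_add tendsto_const)
  then show ?thesis by simp
qed

lemma bolzano_fin:
  fixes X :: "nat \<Rightarrow> nat \<Rightarrow> real"
  assumes "\<And>k n. \<bar>X k n\<bar> \<le> B"
  shows "\<exists>r. strict_mono r \<and> (\<forall>n<N. convergent (\<lambda>k. X (r k) n))"
proof (induction N)
  case 0
  have "strict_mono (\<lambda>k::nat. k)" by (simp add: strict_mono_def)
  then show ?case by (intro exI[of _ "\<lambda>k. k"]) auto
next
  case (Suc N)
  then obtain r where r: "strict_mono r" "\<forall>n<N. convergent (\<lambda>k. X (r k) n)" by blast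
  obtain f where f: "strict_mono f" "monoseq (\<lambda>k. X (r (f k)) N)"
    using seq_monosub[of "\<lambda>k. X (r k) N"] by blast
  have "Bseq (\<lambda>k. X (r (f k)) N)" using assms by (intro BseqI') auto
  then have cN: "convergent (\<lambda>k. X (r (f k)) N)" using f(2) by (rule Bseq_monoseq_convergent)
  have "convergent (\<lambda>k. X (r (f k)) n)" if "n < Suc N" for n
  proof (cases "n = N")
    case True then show ?thesis using cN by simp
  next
    case False
    then have "convergent ((\<lambda>k. X (r k) n) \<circ> f)" using r(2) that f(1)
      by (intro convergent_subseq_convergent) auto
    then show ?thesis by (simp add: o_def)
  qed
  moreover have "strict_mono (\<lambda>k. r (f k))" using strict_mono_o[OF r(1) f(1)] by (simp add: o_def)
  ultimately show ?case by (intro exI[of _ "\<lambda>k. r (f k)"]) auto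
qed

context ccG
begin

definition distW :: "(nat \<Rightarrow> real) \<Rightarrow> real" where
  "distW y = Inf ((\<lambda>w. nN N (\<lambda>n. y n - w n)) ` W)"

lemma distW_le: "w \<in> W \<Longrightarrow> distW y \<le> nN N (\<lambda>n. y n - w n)"
  unfolding distW_def
  by (rule cInf_lower) (auto intro!: bdd_belowI[of _ 0] simp: nN_nonneg)

lemma distW_ge: "(\<And>w. w \<in> W \<Longrightarrow> c \<le> nN N (\<lambda>n. y n - w n)) \<Longrightarrow> c \<le> distW y"
  unfolding distW_def
  by (rule cInf_greatest) (use W_zero in auto)

lemma distW_approx: "distW y < c \<Longrightarrow> \<exists>w\<in>W. nN N (\<lambda>n. y n - w n) < c"
  unfolding distW_def using cInf_lessD[of "(\<lambda>w. nN N (\<lambda>n. y n - w n)) ` W" c] W_zero by auto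

lemma distW_nonneg: "0 \<le> distW y"
  by (rule distW_ge) (simp add: nN_nonneg)

lemma distW_le_norm: "distW y \<le> nN N y"
  using distW_le[OF W_zero, of y] by simp

lemma distW_lip: "distW y \<le> distW z + nN N (\<lambda>n. y n - z n)"
proof -
  have "distW y - nN N (\<lambda>n. y n - z n) \<le> distW z"
  proof (rule distW_ge)
    fix w assume "w \<in> W"
    have "distW y \<le> nN N (\<lambda>n. y n - w n)" using \<open>w \<in> W\<close> by (rule distW_le)
    also have "\<dots> \<le> nN N (\<lambda>n. y n - z n) + nN N (\<lambda>n. z n - w n)" by (rule nN_diff_triangle)
    finally show "distW y - nN N (\<lambda>n. y n - z n) \<le> nN N (\<lambda>n. z n - w n)" by simp
  qed
  then show ?thesis by simp
qed

lemma distW_pos: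
  assumes "y \<notin> W" shows "distW y > 0"
proof (rule ccontr)
  assume "\<not> distW y > 0"
  then have d0: "distW y < 1 / (real k + 1)" for k
  proof -
    have "(0::real) < 1 / (real k + 1)" by simp
    then show ?thesis using distW_nonneg[of y] \<open>\<not> distW y > 0\<close> by linarith
  qed
  have "\<forall>k. \<exists>w\<in>W. nN N (\<lambda>n. y n - w n) < 1 / (real k + 1)"
    using distW_approx[OF d0] by blast
  then obtain w where w: "\<And>k. w k \<in> W" "\<And>k. nN N (\<lambda>n. y n - w k n) < 1 / (real k + 1)" by metis
  have "y \<in> W"
  proof (rule W_closed[OF w(1)])
    fix n assume "n < N"
    show "(\<lambda>k. w k n) \<longlonglongrightarrow> y n"
    proof (rule tendsto_by_bound[where c=1])
      fix k
      have "\<bar>y n - w k n\<bar> \<le> nN N (\<lambda>n. y n - w k n)" using nN_coord[of n N "\<lambda>n. y n - w k n"] \<open>n < N\<close> by simp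
      then show "\<bar>w k n - y n\<bar> \<le> 1 / (real k + 1)" using w(2)[of k] by (simp add: abs_minus_commute)
    qed
  qed
  then show False using assms by simp
qed

lemma small_in_W: "\<exists>r>0. \<forall>y. inK y \<and> nN N y < r \<longrightarrow> y \<in> W"
proof (rule ccontr)
  assume neg: "\<not> ?thesis"
  have "\<exists>y. inK y \<and> nN N y < 1 / (real k + 1) \<and> y \<notin> W" for k
  proof -
    have "(0::real) < 1 / (real k + 1)" by simp
    then show ?thesis using neg by blast
  qed
  then obtain Y where Y: "\<And>k. inK (Y k)" "\<And>k. nN N (Y k) < 1 / (real k + 1)" "\<And>k. Y k \<notin> W"
    by metis
  define dl where "dl k = distW (Y k)" for k
  have dlpos: "dl k > 0" for k using distW_pos[OF Y(3)] by (simp add: dl_def)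
  have dlle: "dl k \<le> nN N (Y k)" for k using distW_le_norm by (simp add: dl_def)
  have "\<forall>k. \<exists>w\<in>W. nN N (\<lambda>n. Y k n - w n) < 2 * dl k"
    using distW_approx dlpos by (simp add: dl_def)
  then obtain Wk where Wk: "\<And>k. Wk k \<in> W" "\<And>k. nN N (\<lambda>n. Y k n - Wk k n) < 2 * dl k" by metis
  define Z where "Z k = (\<lambda>n. Y k n - Wk k n)" for k
  have Zin: "inK (Z k)" for k unfolding Z_def by (intro inK_diff Y(1) W_inK Wk(1))
  have dlZ: "dl k \<le> distW (Z k)" for k
  proof (rule distW_ge)
    fix w assume "w \<in> W"
    then have "dl k \<le> nN N (\<lambda>n. Y k n - (Wk k n + w n))"
      unfolding dl_def by (intro distW_le W_add Wk(1))
    then show "dl k \<le> nN N (\<lambda>n. Z k n - w n)" by (simp add: Z_def algebra_simps)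
  qed
  define a where "a k = nN N (Z k)" for k
  have a_ge: "dl k \<le> a k" for k using dlZ[of k] distW_le_norm[of "Z k"] by (simp add: a_def)
  have apos: "a k > 0" for k using a_ge[of k] dlpos[of k] by simp
  have a_lt: "a k < 2 * dl k" for k using Wk(2) by (simp add: a_def Z_def)
  have a_small: "a k \<le> 2 / (real k + 1)" for k
    using a_lt[of k] dlle[of k] Y(2)[of k] by simp
  define D where "D k = (\<lambda>n. if n < N then Z k n / a k else 0)" for k
  have Dbound: "\<bar>D k n\<bar> \<le> 1" for k n
  proof (cases "n < N")
    case True
    have "\<bar>Z k n\<bar> \<le> a k" unfolding a_def using nN_coord[of n N "Z k"] True by simp
    have "\<bar>D k n\<bar> = \<bar>Z k n\<bar> / a k" using True apos[of k] by (simp add: D_def abs_divide)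
    also have "\<dots> \<le> 1" using \<open>\<bar>Z k n\<bar> \<le> a k\<close> apos[of k] by simp
    finally show ?thesis .
  next
    case False then show ?thesis by (simp add: D_def)
  qed
  have distD: "distW (D k) > 1/2" for k
  proof -
    have "dl k / a k \<le> distW (D k)"
    proof (rule distW_ge)
      fix w assume "w \<in> W"
      then have "dl k \<le> nN N (\<lambda>n. Z k n - a k * w n)"
        using dlZ[of k] distW_le[OF W_scale[OF \<open>w \<in> W\<close>, of "a k"], of "Z k"] by linarith
      also have "nN N (\<lambda>n. Z k n - a k * w n) = a k * nN N (\<lambda>n. D k n - w n)"
      proof -
        have "nN N (\<lambda>n. D k n - w n) = nN N (\<lambda>n. (1 / a k) * (Z k n - a k * w n))"
          unfolding nN_def D_def using apos[of k] by (intro sum.cong) (auto simp: field_simps)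
        also have "\<dots> = (1 / a k) * nN N (\<lambda>n. Z k n - a k * w n)"
          using nN_scale[of N "1 / a k" "\<lambda>n. Z k n - a k * w n"] apos[of k] by simp
        finally show ?thesis using apos[of k] by simp
      qed
      finally show "dl k / a k \<le> nN N (\<lambda>n. D k n - w n)"
        using apos[of k] by (simp add: divide_le_eq mult.commute)
    qed
    moreover have "1/2 < dl k / a k" using a_lt[of k] apos[of k] by (simp add: field_simps)
    ultimately show ?thesis by linarith
  qed
  obtain s where s: "strict_mono s" "\<forall>n<N. convergent (\<lambda>k. D (s k) n)"
    using bolzano_fin[of D 1 N] Dbound by blast
  define d where "d n = lim (\<lambda>k. D (s k) n)" for n
  have dlim: "(\<lambda>k. D (s k) n) \<longlonglongrightarrow> d n" if "n < N" for n
    using s(2) that convergent_LIMSEQ_iff unfolding d_def by blast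
  have as0: "(\<lambda>k. a (s k)) \<longlonglongrightarrow> 0"
  proof (rule tendsto_by_bound[where c=2])
    fix k
    have "real k \<le> real (s k)" using seq_suble[OF s(1)] by simp
    then have "2 / (real (s k) + 1) \<le> 2 / (real k + 1)"
      by (intro divide_left_mono) auto
    then show "\<bar>a (s k) - 0\<bar> \<le> 2 / (real k + 1)" using a_small[of "s k"] apos[of "s k"] by simp
  qed
  have dW: "d \<in> W"
    unfolding W_def
  proof (intro CollectI allI)
    fix t
    define m where "m k = \<lfloor>t / a (s k)\<rfloor>" for k
    define c where "c k = real_of_int (m k) * a (s k)" for k
    have c_lim: "c \<longlonglongrightarrow> t"
    proof -
      have "\<bar>c k - t\<bar> \<le> a (s k)" for k
      proof -
        have "real_of_int (m k) \<le> t / a (s k)" "t / a (s k) < real_of_int (m k) + 1"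
          unfolding m_def by linarith+
        then have "real_of_int (m k) * a (s k) \<le> t" "t < (real_of_int (m k) + 1) * a (s k)"
          using apos[of "s k"] by (simp_all add: field_simps)
        then show ?thesis by (simp add: c_def algebra_simps)
      qed
      then have "(\<lambda>k. c k - t) \<longlonglongrightarrow> 0"
        by (intro Lim_null_comparison[OF _ as0]) auto
      then have "(\<lambda>k. c k - t + t) \<longlonglongrightarrow> 0 + t" by (intro tendsto_add tendsto_const)
      then show ?thesis by simp
    qed
    show "inK (\<lambda>n. t * d n)"
    proof (rule inK_closed[where Y="\<lambda>k n. real_of_int (m k) * Z (s k) n"])
      show "inK (\<lambda>n. real_of_int (m k) * Z (s k) n)" for k by (intro inK_int_mult Zin)
      fix n assume n: "n < N"
      have "(\<lambda>k. c k * D (s k) n) \<longlonglongrightarrow> t * d n" by (intro tendsto_mult c_lim dlim n)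
      moreover have "c k * D (s k) n = real_of_int (m k) * Z (s k) n" for k
        using n apos[of "s k"] by (simp add: c_def D_def)
      ultimately show "(\<lambda>k. real_of_int (m k) * Z (s k) n) \<longlonglongrightarrow> t * d n" by simp
    qed
  qed
  have "distW d \<le> 0" using distW_le[OF dW, of d] by simp
  have "(\<lambda>k. nN N (\<lambda>n. D (s k) n - d n)) \<longlonglongrightarrow> 0" by (rule nN_tendsto) (rule dlim)
  then obtain k0 where k0: "\<forall>k\<ge>k0. norm (nN N (\<lambda>n. D (s k) n - d n) - 0) < 1/2"
    unfolding LIMSEQ_iff by (meson half_gt_zero zero_less_one)
  then have k: "nN N (\<lambda>n. D (s k0) n - d n) < 1/2" using nN_nonneg[of N "\<lambda>n. D (s k0) n - d n"] by auto
  have "distW (D (s k0)) \<le> distW d + nN N (\<lambda>n. D (s k0) n - d n)" by (rule distW_lip)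
  then show False using distD[of "s k0"] k \<open>distW d \<le> 0\<close> by simp
qed

end


lemma frac_eq_diff_int: fixes a b :: real shows "frac a = frac b \<Longrightarrow> a - b \<in> \<int>"
proof -
  assume "frac a = frac b"
  then have "a - b = of_int (\<lfloor>a\<rfloor> - \<lfloor>b\<rfloor>)" by (simp add: frac_def)
  then show ?thesis by simp
qed

context ccG
begin

definition rW where "rW = (SOME r. r > 0 \<and> (\<forall>y. inK y \<and> nN N y < r \<longrightarrow> y \<in> W))"

lemma rW: "rW > 0" "\<And>y. inK y \<Longrightarrow> nN N y < rW \<Longrightarrow> y \<in> W"
  using someI_ex[OF small_in_W] unfolding rW_def by blast+

definition rho where "rho = rW / (real N * 2^N + 1)"

lemma rho_pos: "rho > 0"
  using rW(1) by (simp add: rho_def add_nonneg_pos)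

lemma near:
  assumes g: "g \<in> G" and g': "g' \<in> G" and d: "dTN g g' < rho"
  shows "\<exists>y\<in>W. nN N y < rW \<and> (\<forall>n<N. frac (g n + y n) = g' n)"
proof -
  have "\<forall>n. \<exists>k. dT (g' n) (g n) = \<bar>g' n - g n - of_int k\<bar>" using dT_ex_int by blast
  then obtain k where k: "\<And>n. dT (g' n) (g n) = \<bar>g' n - g n - of_int (k n)\<bar>" by metis
  define y where "y n = g' n - g n - of_int (k n)" for n
  have gTN: "g \<in> TN" "g' \<in> TN" using g g' G_TN by auto
  have "inK y"
    unfolding inK_def
  proof (intro bexI[of _ "TN_add g' (TN_neg g)"] allI impI)
    show "TN_add g' (TN_neg g) \<in> G" using g g' by (intro G_diff)
    fix n
    have "TN_add g' (TN_neg g) n = frac (g' n - g n)"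
      by (simp add: TN_add_def TN_neg_def tadd_def tneg_def frac_add_frac_right)
    also have "\<dots> = frac (y n)" by (rule frac_eq_intdiff[of _ _ "k n"]) (simp add: y_def)
    finally show "TN_add g' (TN_neg g) n = frac (y n)" .
  qed
  moreover have "nN N y < rW"
  proof -
    have "nN N y = (\<Sum>n<N. dT (g' n) (g n))" unfolding nN_def y_def using k by simp
    also have "\<dots> \<le> of_nat (card {..<N}) * (2^N * dTN g g')"
    proof (rule sum_bounded_above)
      fix n assume "n \<in> {..<N}"
      then have "(2::real)^n \<le> 2^N" by (intro power_increasing) auto
      then have "2^n * dTN g g' \<le> 2^N * dTN g g'" by (intro mult_right_mono dTN_nonneg)
      moreover have "dT (g' n) (g n) \<le> 2^n * dTN g g'" using dTN_coord[of g n g'] by (simp add: dT_sym)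
      ultimately show "dT (g' n) (g n) \<le> 2^N * dTN g g'" by linarith
    qed
    also have "\<dots> = (real N * 2^N) * dTN g g'" by simp
    also have "\<dots> \<le> (real N * 2^N + 1) * dTN g g'" by (intro mult_right_mono dTN_nonneg) simp
    also have "\<dots> < (real N * 2^N + 1) * rho" using d by (intro mult_strict_left_mono) (auto simp: add_nonneg_pos)
    also have "\<dots> = rW"
    proof -
      have "real N * 2^N + 1 > 0" by (simp add: add_nonneg_pos)
      then show ?thesis unfolding rho_def by simp
    qed
    finally show ?thesis .
  qed
  ultimately have "y \<in> W" by (rule rW(2))
  moreover have "frac (g n + y n) = g' n" for n
  proof -
    have "frac (g n + y n) = frac (g' n)" by (rule frac_eq_intdiff[of _ _ "- k n"]) (simp add: y_def)
    then show ?thesis using TN_frac_id[OF gTN(2)] by simp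
  qed
  ultimately show ?thesis using \<open>nN N y < rW\<close> by blast
qed

definition S where "S = {g \<in> G. \<exists>w\<in>W. \<forall>n<N. g n = frac (w n)}"

lemma S_step:
  assumes g: "g \<in> G" and g': "g' \<in> G" and d: "dTN g g' < rho"
  shows "g \<in> S \<longleftrightarrow> g' \<in> S"
proof -
  obtain y where y: "y \<in> W" "\<forall>n<N. frac (g n + y n) = g' n" using near[OF g g' d] by blast
  show ?thesis
  proof
    assume "g \<in> S"
    then obtain w where w: "w \<in> W" "\<forall>n<N. g n = frac (w n)" unfolding S_def by blast
    have "\<forall>n<N. g' n = frac (w n + y n)"
    proof (intro allI impI)
      fix n assume n: "n < N"
      have e1: "g n = frac (w n)" using w(2) n by blast
      have e2: "frac (g n + y n) = g' n" using y(2) n by blast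
      have "frac (w n + y n) = frac (frac (w n) + y n)" by (simp add: frac_add_frac_left)
      also have "\<dots> = g' n" using e1 e2 by simp
      finally show "g' n = frac (w n + y n)" by simp
    qed
    then show "g' \<in> S" unfolding S_def using g' W_add[OF w(1) y(1)]
      by (intro CollectI conjI bexI[of _ "\<lambda>n. w n + y n"]) auto
  next
    assume "g' \<in> S"
    then obtain w where w: "w \<in> W" "\<forall>n<N. g' n = frac (w n)" unfolding S_def by blast
    have gT: "g \<in> TN" using g G_TN by auto
    have "\<forall>n<N. g n = frac (w n - y n)"
    proof (intro allI impI)
      fix n assume n: "n < N"
      have e1: "g' n = frac (w n)" using w(2) n by blast
      have e2: "frac (g n + y n) = g' n" using y(2) n by blast
      have "frac (w n - y n) = frac (frac (w n) + - y n)"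
        using frac_add_frac_left[of "w n" "- y n"] by simp
      also have "\<dots> = frac (frac (g n + y n) + - y n)" using e1 e2 by simp
      also have "\<dots> = frac (g n)" using frac_add_frac_left[of "g n + y n" "- y n"] by simp
      also have "\<dots> = g n" by (rule TN_frac_id[OF gT])
      finally show "g n = frac (w n - y n)" by simp
    qed
    then show "g \<in> S" unfolding S_def using g W_diff[OF w(1) y(1)]
      by (intro CollectI conjI bexI[of _ "\<lambda>n. w n - y n"]) auto
  qed
qed

lemma S_eq: "S = G"
proof -
  interpret MG: Metric_space G dTN using G_TN by (rule Metric_space_sub)
  have cs: "connected_space MG.mtopology"
    using G_connected sub_top[OF G_TN] by (simp add: connectedin_def)
  have S_sub: "S \<subseteq> G" by (auto simp: S_def)
  have op: "openin MG.mtopology T" if T: "T = S \<or> T = G - S" for T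
    unfolding MG.openin_mtopology
  proof (intro conjI allI impI)
    show "T \<subseteq> G" using T S_sub by auto
    fix x assume "x \<in> T"
    show "\<exists>r>0. MG.mball x r \<subseteq> T"
    proof (intro exI[of _ rho] conjI rho_pos subsetI)
      fix z assume "z \<in> MG.mball x rho"
      then have z: "z \<in> G" "x \<in> G" "dTN x z < rho" by auto
      then show "z \<in> T" using S_step[OF z(2) z(1) z(3)] \<open>x \<in> T\<close> T by auto
    qed
  qed
  have "openin MG.mtopology S" using op by auto
  moreover have "closedin MG.mtopology S"
    unfolding closedin_def using op[of "G - S"] S_sub by auto
  ultimately have "S = {} \<or> S = G" using cs[unfolded connected_space_clopen_in] by auto
  moreover have "(\<lambda>n. 0) \<in> S" unfolding S_def using G_zero W_zero by force
  ultimately show ?thesis by auto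
qed

lemma G_lift: "g \<in> G \<Longrightarrow> \<exists>w\<in>W. \<forall>n<N. g n = frac (w n)"
  using S_eq by (auto simp: S_def)

definition intv :: "(nat \<Rightarrow> real) \<Rightarrow> bool" where
  "intv l \<longleftrightarrow> (\<forall>n<N. l n \<in> \<int>)"

lemma R_bound: "\<exists>R. \<forall>w\<in>W. \<exists>l\<in>W. intv l \<and> nN N (\<lambda>n. w n - l n) \<le> R"
proof -
  have tb: "TNM.mtotally_bounded G" using G_compact by (simp add: TN_top_def TNM.compactin_imp_mtotally_bounded)
  have "\<exists>K. finite K \<and> K \<subseteq> G \<and> G \<subseteq> (\<Union>x\<in>K. TNM.mball x rho)"
    using spec[OF tb[unfolded TNM.mtotally_bounded_def], of rho] rho_pos by (rule mp)
  then obtain K where K: "finite K" "K \<subseteq> G" "G \<subseteq> (\<Union>x\<in>K. TNM.mball x rho)"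
    by blast
  have "\<forall>x\<in>K. \<exists>w\<in>W. \<forall>n<N. x n = frac (w n)" using K(2) G_lift by blast
  then obtain wf where wf0: "\<forall>x\<in>K. wf x \<in> W \<and> (\<forall>n<N. x n = frac (wf x n))"
    using bchoice[of K "\<lambda>x w. w \<in> W \<and> (\<forall>n<N. x n = frac (w n))"] by blast
  have wf: "\<And>x. x \<in> K \<Longrightarrow> wf x \<in> W" "\<And>x n. x \<in> K \<Longrightarrow> n < N \<Longrightarrow> x n = frac (wf x n)"
    using wf0 by auto
  define R where "R = (\<Sum>x\<in>K. nN N (wf x)) + rW"
  show ?thesis
  proof (intro exI[of _ R] ballI)
    fix w assume w: "w \<in> W"
    then obtain g where g: "g \<in> G" "\<forall>n<N. g n = frac (w n)" using W_inK unfolding inK_def by blast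
    then obtain x where x: "x \<in> K" "g \<in> TNM.mball x rho" using K(3) by blast
    have xG: "x \<in> G" using x(1) K(2) by blast
    have dxg: "dTN x g < rho" using x(2) by simp
    obtain y where y: "y \<in> W" "nN N y < rW" "\<forall>n<N. frac (x n + y n) = g n"
      using near[OF xG g(1) dxg] by blast
    define l where "l n = w n - wf x n - y n" for n
    have "l \<in> W" unfolding l_def by (intro W_diff w wf(1) x(1) y(1))
    moreover have "intv l"
      unfolding intv_def
    proof (intro allI impI)
      fix n assume n: "n < N"
      have e1: "g n = frac (w n)" using g(2) n by blast
      have e2: "frac (x n + y n) = g n" using y(3) n by blast
      have e3: "x n = frac (wf x n)" using wf(2)[OF x(1) n] .
      have "frac (w n) = frac (frac (wf x n) + y n)" using e1 e2 e3 by simp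
      then have "frac (w n) = frac (wf x n + y n)" by (simp add: frac_add_frac_left)
      then have "w n - (wf x n + y n) \<in> \<int>" by (rule frac_eq_diff_int)
      then show "l n \<in> \<int>" by (simp add: l_def diff_diff_eq)
    qed
    moreover have "nN N (\<lambda>n. w n - l n) \<le> R"
    proof -
      have "nN N (\<lambda>n. w n - l n) = nN N (\<lambda>n. wf x n + y n)" by (simp add: l_def)
      also have "\<dots> \<le> nN N (wf x) + nN N y" by (rule nN_triangle)
      also have "nN N (wf x) \<le> (\<Sum>x\<in>K. nN N (wf x))"
        using x(1) K(1) by (intro member_le_sum nN_nonneg) auto
      finally show ?thesis using y(2) by (simp add: R_def)
    qed
    ultimately show "\<exists>l\<in>W. intv l \<and> nN N (\<lambda>n. w n - l n) \<le> R" by blast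
  qed
qed

lemma claimB:
  assumes g: "g \<in> G" and e: "e > 0"
  shows "\<exists>l\<in>W. intv l \<and> (\<exists>t. \<forall>n<N. dT (g n) (t * l n) < e)"
proof -
  obtain R where R: "\<And>w. w \<in> W \<Longrightarrow> \<exists>l\<in>W. intv l \<and> nN N (\<lambda>n. w n - l n) \<le> R"
    using R_bound by blast
  obtain w where w: "w \<in> W" "\<forall>n<N. g n = frac (w n)" using G_lift[OF g] by blast
  obtain M :: nat where M: "real M > \<bar>R\<bar> / e" using reals_Archimedean2 by blast
  have "\<bar>R\<bar> / e \<ge> 0" using e by simp
  then have Mpos: "real M > 0" using M by linarith
  obtain l where l: "l \<in> W" "intv l" "nN N (\<lambda>n. real M * w n - l n) \<le> R"
    using R[OF W_scale[OF w(1), of "real M"]] by blast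
  have "\<forall>n<N. dT (g n) ((1 / real M) * l n) < e"
  proof (intro allI impI)
    fix n assume n: "n < N"
    have "dT (g n) ((1 / real M) * l n) = dT (w n) ((1 / real M) * l n)" using w(2) n by simp
    also have "\<dots> \<le> \<bar>w n - (1 / real M) * l n\<bar>" by (rule dT_abs)
    also have "\<dots> = \<bar>real M * w n - l n\<bar> / real M"
      using Mpos by (simp add: field_simps abs_divide)
    also have "\<dots> \<le> R / real M"
      using nN_coord[of n N "\<lambda>n. real M * w n - l n"] n l(3) Mpos by (simp add: divide_right_mono)
    also have "\<dots> < e" using M Mpos e by (simp add: divide_less_eq field_simps)
    finally show "dT (g n) ((1 / real M) * l n) < e" .
  qed
  then show ?thesis using l by blast
qed

end


lemma circle:
  fixes V :: "(nat \<Rightarrow> real) set" and N :: nat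
  assumes V0: "(\<lambda>n. 0) \<in> V"
    and Vadd: "\<And>a b. a \<in> V \<Longrightarrow> b \<in> V \<Longrightarrow> (\<lambda>n. a n + b n) \<in> V"
    and Vsc: "\<And>a c. a \<in> V \<Longrightarrow> (\<lambda>n. c * a n) \<in> V"
  shows "\<forall>l\<in>set ls. l \<in> V \<and> (\<forall>n<N. l n \<in> \<int>) \<Longrightarrow> \<delta> > 0 \<Longrightarrow>
    \<exists>u\<in>V. (\<forall>n<N. u n \<in> \<int>) \<and> (\<forall>b. \<exists>t. \<forall>n<N. dT (\<Sum>i<length ls. b i * (ls!i) n) (t * u n) < \<delta>)"
proof (induction ls arbitrary: \<delta>)
  case Nil
  show ?case
    by (intro bexI[of _ "\<lambda>n. 0"] conjI allI exI[of _ 0]) (use V0 Nil in auto)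
next
  case (Cons l ls)
  have lV: "l \<in> V" and lint: "\<forall>n<N. l n \<in> \<int>" using Cons.prems(1) by auto
  obtain u0 where u0: "u0 \<in> V" "\<forall>n<N. u0 n \<in> \<int>"
    "\<forall>b. \<exists>t. \<forall>n<N. dT (\<Sum>i<length ls. b i * (ls!i) n) (t * u0 n) < \<delta>/2"
    using Cons.IH[of "\<delta>/2"] Cons.prems by auto
  define L where "L = nN N l"
  obtain M0 :: nat where M0: "real M0 > 2 * L / \<delta>" using reals_Archimedean2 by blast
  define M where "M = M0 + 1"
  have Mpos: "real M > 0" and Mge: "real M > 2 * L / \<delta>" using M0 by (auto simp: M_def)
  define u where "u n = real M * u0 n + l n" for n
  have uV: "u \<in> V" unfolding u_def by (intro Vadd Vsc u0(1) lV)
  have uint: "\<forall>n<N. u n \<in> \<int>" unfolding u_def using u0(2) lint by (auto intro: Ints_add Ints_mult)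
  have "\<exists>t. \<forall>n<N. dT (\<Sum>i<length (l # ls). b i * ((l # ls)!i) n) (t * u n) < \<delta>" for b
  proof -
    obtain s where s: "\<forall>n<N. dT (\<Sum>i<length ls. b (Suc i) * (ls!i) n) (s * u0 n) < \<delta>/2"
      using spec[OF u0(3), of "\<lambda>i. b (Suc i)"] by (elim exE) simp
    define \<beta> where "\<beta> = frac (b 0)"
    define j where "j = \<lfloor>real M * \<beta>\<rfloor>"
    define t where "t = (frac s + of_int j) / real M"
    have tM: "t * real M = frac s + of_int j" using Mpos by (simp add: t_def)
    have bt: "\<bar>\<beta> - t\<bar> \<le> 1 / real M"
    proof -
      have "of_int j \<le> real M * \<beta>" "real M * \<beta> < of_int j + 1" unfolding j_def by linarith+
      moreover have "0 \<le> frac s" "frac s < 1" by (auto simp: frac_lt_1)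
      ultimately have "\<bar>real M * \<beta> - t * real M\<bar> \<le> 1" using tM by linarith
      moreover have "\<bar>real M * \<beta> - t * real M\<bar> = real M * \<bar>\<beta> - t\<bar>"
      proof -
        have "real M * \<beta> - t * real M = real M * (\<beta> - t)" by (simp add: algebra_simps)
        then show ?thesis using Mpos by (simp add: abs_mult)
      qed
      ultimately have "real M * \<bar>\<beta> - t\<bar> \<le> 1" by simp
      then show ?thesis using Mpos by (simp add: field_simps)
    qed
    have "dT (\<Sum>i<length (l # ls). b i * ((l # ls)!i) n) (t * u n) < \<delta>" if n: "n < N" for n
    proof -
      have "u0 n \<in> \<int>" using u0(2) n by blast
      then obtain ku where ku: "u0 n = of_int ku" by (rule Ints_cases)
      have "l n \<in> \<int>" using lint n by blast
      then obtain kl where kl: "l n = of_int kl" by (rule Ints_cases)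
      define S where "S = (\<Sum>i<length ls. b (Suc i) * (ls!i) n)"
      have sum_eq: "(\<Sum>i<length (l # ls). b i * ((l # ls)!i) n) = S + b 0 * l n"
        unfolding S_def length_Cons sum.lessThan_Suc_shift by simp
      have tu: "t * u n = (frac s + of_int j) * u0 n + t * l n"
      proof -
        have "t * u n = (t * real M) * u0 n + t * l n" by (simp add: u_def algebra_simps)
        then show ?thesis using tM by simp
      qed
      have "dT (S + b 0 * l n) ((frac s + of_int j) * u0 n + t * l n)
          \<le> dT S ((frac s + of_int j) * u0 n) + dT (b 0 * l n) (t * l n)" by (rule dT_add)
      also have "dT S ((frac s + of_int j) * u0 n) = dT S (s * u0 n)"
        by (rule dT_eq_shift[of _ _ _ _ "(\<lfloor>s\<rfloor> - j) * ku"]) (simp add: ku frac_def algebra_simps)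
      also have "dT (b 0 * l n) (t * l n) = dT (\<beta> * l n) (t * l n)"
        by (rule dT_eq_shift[of _ _ _ _ "\<lfloor>b 0\<rfloor> * kl"]) (simp add: kl \<beta>_def frac_def algebra_simps)
      also have "dT (\<beta> * l n) (t * l n) \<le> \<bar>\<beta> - t\<bar> * \<bar>l n\<bar>"
        using dT_abs[of "\<beta> * l n" "t * l n"] by (simp add: abs_mult[symmetric] algebra_simps)
      also have "\<bar>\<beta> - t\<bar> * \<bar>l n\<bar> \<le> (1 / real M) * L"
        using bt nN_coord[of n N l] n by (intro mult_mono) (auto simp: L_def)
      finally have "dT (S + b 0 * l n) ((frac s + of_int j) * u0 n + t * l n)
          \<le> dT S (s * u0 n) + (1 / real M) * L" by simp
      moreover have "dT S (s * u0 n) < \<delta>/2" using s n by (simp add: S_def)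
      moreover have "(1 / real M) * L < \<delta>/2"
        using Mge Mpos Cons.prems(2) by (simp add: field_simps)
      ultimately have "dT (S + b 0 * l n) ((frac s + of_int j) * u0 n + t * l n) < \<delta>" by linarith
      then show ?thesis unfolding sum_eq tu .
    qed
    then show ?thesis by blast
  qed
  then show ?case using uV uint by blast
qed


context ccG
begin

lemma sum_single:
  fixes f :: "nat \<Rightarrow> real"
  assumes "i < m"
  shows "(\<Sum>j<m. (if j = i then c else 0) * f j) = c * f i"
proof -
  have "(\<Sum>j<m. (if j = i then c else 0) * f j) = (\<Sum>j<m. if j = i then c * f i else 0)"
    by (intro sum.cong) auto
  also have "\<dots> = c * f i" using assms by (simp add: sum.delta)
  finally show ?thesis .
qed

lemma claimC:
  assumes e: "e > 0"
  shows "\<exists>u\<in>W. intv u \<and> (\<forall>g\<in>G. \<exists>t. \<forall>n<N. dT (g n) (t * u n) < e)"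
proof -
  define eta where "eta = e / 2 / 2^N"
  have eta: "eta > 0" using e by (simp add: eta_def)
  have tb: "TNM.mtotally_bounded G" using G_compact by (simp add: TN_top_def TNM.compactin_imp_mtotally_bounded)
  have "\<exists>K. finite K \<and> K \<subseteq> G \<and> G \<subseteq> (\<Union>x\<in>K. TNM.mball x eta)"
    using spec[OF tb[unfolded TNM.mtotally_bounded_def], of eta] eta by (rule mp)
  then obtain K where K: "finite K" "K \<subseteq> G" "G \<subseteq> (\<Union>x\<in>K. TNM.mball x eta)"
    by blast
  have e4: "e / 4 > 0" using e by simp
  have "\<forall>x\<in>K. \<exists>l. l \<in> W \<and> intv l \<and> (\<exists>t. \<forall>n<N. dT (x n) (t * l n) < e/4)"
    using claimB[OF _ e4] K(2) by blast
  then obtain lf where lf: "\<forall>x\<in>K. lf x \<in> W \<and> intv (lf x) \<and> (\<exists>t. \<forall>n<N. dT (x n) (t * lf x n) < e/4)"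
    using bchoice[of K "\<lambda>x l. l \<in> W \<and> intv l \<and> (\<exists>t. \<forall>n<N. dT (x n) (t * l n) < e/4)"] by blast
  then have "\<forall>x\<in>K. \<exists>t. \<forall>n<N. dT (x n) (t * lf x n) < e/4" by blast
  then obtain tf where tf: "\<forall>x\<in>K. \<forall>n<N. dT (x n) (tf x * lf x n) < e/4"
    using bchoice[of K "\<lambda>x t. \<forall>n<N. dT (x n) (t * lf x n) < e/4"] by blast
  obtain xs where xs: "set xs = K" using finite_list[OF K(1)] by blast
  define ls where "ls = map lf xs"
  have lsok: "\<forall>l\<in>set ls. l \<in> W \<and> (\<forall>n<N. l n \<in> \<int>)"
    using lf xs by (auto simp: ls_def intv_def)
  obtain u where u: "u \<in> W" "\<forall>n<N. u n \<in> \<int>"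
      "\<forall>b. \<exists>t. \<forall>n<N. dT (\<Sum>i<length ls. b i * (ls!i) n) (t * u n) < e/4"
    using circle[of W, OF W_zero W_add W_scale lsok e4] by blast
  have "\<forall>g\<in>G. \<exists>t. \<forall>n<N. dT (g n) (t * u n) < e"
  proof
    fix g assume g: "g \<in> G"
    then obtain x where x: "x \<in> K" "g \<in> TNM.mball x eta" using K(3) by blast
    then obtain i where i: "i < length xs" "xs ! i = x" using xs by (metis in_set_conv_nth)
    obtain t where t: "\<forall>n<N. dT (\<Sum>j<length ls. (if j = i then tf x else 0) * (ls!j) n) (t * u n) < e/4"
      using spec[OF u(3), of "\<lambda>j. if j = i then tf x else 0"] by (elim exE) simp
    have "\<forall>n<N. dT (g n) (t * u n) < e"
    proof (intro allI impI)
      fix n assume n: "n < N"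
      have ils: "i < length ls" using i by (simp add: ls_def)
      have lsi: "ls ! i = lf x" using i by (simp add: ls_def)
      have A0: "dT (\<Sum>j<length ls. (if j = i then tf x else 0) * (ls!j) n) (t * u n) < e/4"
        using t n by blast
      have A: "dT (tf x * lf x n) (t * u n) < e/4"
        using A0 unfolding sum_single[OF ils, of "tf x" "\<lambda>j. (ls!j) n"] lsi .
      have B: "dT (x n) (tf x * lf x n) < e/4" using tf x(1) n by blast
      have "dTN x g < eta" using x(2) by simp
      then have "2^n * dTN x g < 2^n * eta" by simp
      moreover have "2^n * eta \<le> 2^N * eta" using n eta by (intro mult_right_mono power_increasing) auto
      moreover have "2^N * eta = e/2" by (simp add: eta_def)
      moreover have "dT (g n) (x n) \<le> 2^n * dTN x g" using dTN_coord[of x n g] by (simp add: dT_sym)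
      ultimately have C: "dT (g n) (x n) < e/2" by linarith
      have "dT (g n) (t * u n) \<le> dT (g n) (x n) + dT (x n) (tf x * lf x n) + dT (tf x * lf x n) (t * u n)"
        using dT_triangle[of "g n" "t * u n" "x n"] dT_triangle[of "x n" "t * u n" "tf x * lf x n"] by linarith
      then show "dT (g n) (t * u n) < e" using A B C by linarith
    qed
    then show "\<exists>t. \<forall>n<N. dT (g n) (t * u n) < e" by blast
  qed
  then show ?thesis using u(1,2) by (auto simp: intv_def)
qed

end


definition psi :: "nat \<Rightarrow> (nat \<Rightarrow> real) \<Rightarrow> (nat \<Rightarrow> real) \<Rightarrow> nat \<Rightarrow> real" where
  "psi N u s = (\<lambda>n. if n < N then frac (s 0 * u n) else s (n - N))"

definition shft :: "nat \<Rightarrow> (nat \<Rightarrow> real) \<Rightarrow> nat \<Rightarrow> real" where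
  "shft N x = (\<lambda>n. x (n + N))"

lemma shft_psi [simp]: "shft N (psi N u s) = s"
  by (rule ext) (simp add: shft_def psi_def)

lemma psi_TN: "s \<in> TN \<Longrightarrow> psi N u s \<in> TN"
  by (auto simp: psi_def TN_def frac_lt_1)

lemma frac_frac_mult_int: fixes x c :: real shows "c \<in> \<int> \<Longrightarrow> frac (frac x * c) = frac (x * c)"
proof -
  assume "c \<in> \<int>"
  then obtain k where k: "c = of_int k" by (rule Ints_cases)
  show ?thesis using frac_mult_frac_int[of k x] by (simp add: k mult.commute)
qed

lemma psi_add:
  assumes u: "\<forall>n<N. u n \<in> \<int>"
  shows "TN_add (psi N u s) (psi N u s') = psi N u (TN_add s s')"
proof (rule ext)
  fix n
  show "TN_add (psi N u s) (psi N u s') n = psi N u (TN_add s s') n"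
  proof (cases "n < N")
    case True
    have "psi N u (TN_add s s') n = frac (frac (s 0 + s' 0) * u n)"
      using True by (simp add: psi_def TN_add_def tadd_def)
    also have "\<dots> = frac ((s 0 + s' 0) * u n)" using u True by (simp add: frac_frac_mult_int)
    also have "\<dots> = tadd (frac (s 0 * u n)) (frac (s' 0 * u n))" by (simp add: tadd_frac distrib_right)
    finally show ?thesis using True by (simp add: psi_def TN_add_def)
  next
    case False then show ?thesis by (simp add: psi_def TN_add_def)
  qed
qed

lemma psi_neg:
  assumes u: "\<forall>n<N. u n \<in> \<int>"
  shows "TN_neg (psi N u s) = psi N u (TN_neg s)"
proof (rule ext)
  fix n
  show "TN_neg (psi N u s) n = psi N u (TN_neg s) n"
  proof (cases "n < N")
    case True
    have "psi N u (TN_neg s) n = frac (frac (- s 0) * u n)"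
      using True by (simp add: psi_def TN_neg_def tneg_def)
    also have "\<dots> = frac (- s 0 * u n)" using u True by (simp add: frac_frac_mult_int)
    also have "\<dots> = tneg (frac (s 0 * u n))" by (simp add: tneg_frac)
    finally show ?thesis using True by (simp add: psi_def TN_neg_def)
  next
    case False then show ?thesis by (simp add: psi_def TN_neg_def)
  qed
qed

lemma psi_lip:
  assumes u: "\<forall>n<N. u n \<in> \<int>"
  shows "dTN (psi N u s) (psi N u s') \<le> ((\<Sum>n<N. \<bar>u n\<bar>) + 1) * dTN s s'"
proof -
  have split: "dTN (psi N u s) (psi N u s') = (\<Sum>n<N. dT (psi N u s n) (psi N u s' n) / 2^n) + (1/2)^N * dTN s s'"
    using dTN_split[of "psi N u s" "psi N u s'" N] dTN_shift[of "psi N u s" N "psi N u s'"]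
    by (simp add: shft_def[symmetric])
  have "(\<Sum>n<N. dT (psi N u s n) (psi N u s' n) / 2^n) \<le> (\<Sum>n<N. \<bar>u n\<bar> * dTN s s')"
  proof (rule sum_mono)
    fix n assume "n \<in> {..<N}"
    then have n: "n < N" by simp
    then obtain k where k: "u n = of_int k" using u Ints_cases by metis
    have "dT (psi N u s n) (psi N u s' n) / 2^n \<le> dT (psi N u s n) (psi N u s' n)"
      using dT_nonneg[of "psi N u s n" "psi N u s' n"] mult_left_mono[of 1 "2^n" "dT (psi N u s n) (psi N u s' n)"]
      by (simp add: divide_le_eq)
    also have "\<dots> = dT (of_int k * s 0) (of_int k * s' 0)" using n k by (simp add: psi_def mult.commute)
    also have "\<dots> \<le> \<bar>of_int k\<bar> * dT (s 0) (s' 0)" by (rule dT_mult_int)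
    also have "\<dots> \<le> \<bar>of_int k\<bar> * dTN s s'" using dTN_coord[of s 0 s'] by (intro mult_left_mono) auto
    finally show "dT (psi N u s n) (psi N u s' n) / 2^n \<le> \<bar>u n\<bar> * dTN s s'" using k by simp
  qed
  also have "\<dots> = (\<Sum>n<N. \<bar>u n\<bar>) * dTN s s'" by (simp add: sum_distrib_right)
  finally have A: "(\<Sum>n<N. dT (psi N u s n) (psi N u s' n) / 2^n) \<le> (\<Sum>n<N. \<bar>u n\<bar>) * dTN s s'" .
  have "(1/2::real)^N * dTN s s' \<le> 1 * dTN s s'"
    by (intro mult_right_mono dTN_nonneg) (simp add: power_le_one)
  then show ?thesis using split A by (simp add: algebra_simps)
qed

theorem mainTheorem5:
  fixes p :: "nat \<Rightarrow> nat"
  assumes "\<forall>i. prime (p i)"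
    and "\<forall>q::nat. prime q \<longrightarrow> infinite {i. p i = q}"
  shows "\<forall>G. cc_subgroup G \<longrightarrow>
           (\<forall>\<epsilon>>0. \<exists>H. cc_subgroup H \<and> top_group_iso H (solenoid p) \<and> hausd_TN G H < \<epsilon>)"
proof (intro allI impI)
  fix G :: "(nat \<Rightarrow> real) set" and \<epsilon> :: real
  assume cc: "cc_subgroup G" and \<epsilon>: "\<epsilon> > 0"
  have ppos: "\<forall>i. p i > 0" using assms(1) prime_gt_0_nat by blast
  obtain N where N: "(1/2::real)^N < \<epsilon>/4" using half_pow_small[of "\<epsilon>/4"] \<epsilon> by auto
  interpret ccG G N by (unfold_locales) (rule cc)
  define e where "e = \<epsilon> / (4 * (real N + 1))"
  have e: "e > 0" using \<epsilon> by (simp add: e_def)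
  obtain u where u: "u \<in> W" "intv u" "\<forall>g\<in>G. \<exists>t. \<forall>n<N. dT (g n) (t * u n) < e"
    using claimC[OF e] by blast
  have uint: "\<forall>n<N. u n \<in> \<int>" using u(2) by (simp add: intv_def)
  define H where "H = psi N u ` solenoid p"
  have HTN: "H \<subseteq> TN" unfolding H_def using sol_TN psi_TN by blast
  have psicont: "continuous_map TN_top TN_top (psi N u)"
    using lip_cont[of TN TN "psi N u", OF _ _ _ psi_lip[OF uint]] psi_TN
    by (auto simp: TN_top_def)
  have ccH: "cc_subgroup H"
    unfolding cc_subgroup_def
  proof (intro conjI ballI)
    show "H \<noteq> {}" unfolding H_def using gam_in_sol[OF ppos] by blast
    show "H \<subseteq> TN" by (rule HTN)
    fix x assume x: "x \<in> H"
    then obtain s where s: "s \<in> solenoid p" "x = psi N u s" unfolding H_def by blast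
    show "TN_neg x \<in> H" unfolding H_def s(2) psi_neg[OF uint] using sol_neg[OF s(1)] by blast
    fix y assume "y \<in> H"
    then obtain s' where s': "s' \<in> solenoid p" "y = psi N u s'" unfolding H_def by blast
    show "TN_add x y \<in> H" unfolding H_def s(2) s'(2) psi_add[OF uint] using sol_add[OF s(1) s'(1)] by blast
  next
    show "compactin TN_top H" unfolding H_def by (rule image_compactin[OF sol_compact[OF ppos] psicont])
    show "connectedin TN_top H" unfolding H_def by (rule connectedin_continuous_map_image[OF psicont sol_connected[OF ppos]])
  qed
  have iso: "top_group_iso H (solenoid p)"
    unfolding top_group_iso_def
  proof (intro exI[of _ "shft N"] conjI ballI)
    have left: "\<forall>a\<in>H. psi N u (shft N a) = a" unfolding H_def by auto
    have right: "\<forall>a\<in>solenoid p. shft N (psi N u a) = a" by simp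
    have im1: "shft N ` H \<subseteq> solenoid p" unfolding H_def by auto
    have im2: "psi N u ` solenoid p \<subseteq> H" unfolding H_def by auto
    show "bij_betw (shft N) H (solenoid p)" by (rule bij_betw_byWitness[OF left right im1 im2])
    fix x y show "shft N (TN_add x y) = TN_add (shft N x) (shft N y)"
      by (simp add: shft_def TN_add_def)
  next
    have c1: "continuous_map (subtopology TN_top H) (subtopology TN_top (solenoid p)) (shft N)"
    proof (rule lip_cont[OF HTN sol_TN])
      show "shft N ` H \<subseteq> solenoid p" unfolding H_def by auto
      fix x y show "dTN (shft N x) (shft N y) \<le> 2^N * dTN x y"
        using dTN_shift_le[of x N y] by (simp add: shft_def)
    qed
    have c2: "continuous_map (subtopology TN_top (solenoid p)) (subtopology TN_top H) (psi N u)"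
    proof (rule lip_cont[OF sol_TN HTN])
      show "psi N u ` solenoid p \<subseteq> H" unfolding H_def by auto
      fix x y show "dTN (psi N u x) (psi N u y) \<le> ((\<Sum>n<N. \<bar>u n\<bar>) + 1) * dTN x y"
        by (rule psi_lip[OF uint])
    qed
    show "homeomorphic_map (subtopology TN_top H) (subtopology TN_top (solenoid p)) (shft N)"
      unfolding homeomorphic_map_maps homeomorphic_maps_def
      using c1 c2 sol_TN HTN by (intro exI[of _ "psi N u"]) (auto simp: H_def TN_top_def)
  qed
  have A: "\<exists>h\<in>H. dTN g h \<le> \<epsilon>/2" if g: "g \<in> G" for g
  proof -
    obtain t where t: "\<forall>n<N. dT (g n) (t * u n) < e" using u(3) g by blast
    define h where "h = psi N u (gam p t)"
    have hH: "h \<in> H" unfolding H_def h_def using gam_in_sol[OF ppos] by blast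
    have "dTN g h \<le> (\<Sum>n<N. dT (g n) (h n)) + (1/2)^N" by (rule dTN_le_initial')
    also have "(\<Sum>n<N. dT (g n) (h n)) \<le> of_nat (card {..<N}) * e"
    proof (rule sum_bounded_above)
      fix n assume "n \<in> {..<N}"
      then have n: "n < N" by simp
      have "h n = frac (frac t * u n)" using n by (simp add: h_def psi_def)
      also have "\<dots> = frac (t * u n)" using uint n by (simp add: frac_frac_mult_int)
      finally have "dT (g n) (h n) = dT (g n) (t * u n)" by simp
      moreover have "dT (g n) (t * u n) < e" using t n by blast
      ultimately show "dT (g n) (h n) \<le> e" by linarith
    qed
    also have "of_nat (card {..<N}) * e \<le> \<epsilon>/4"
    proof -
      have "real N * e = \<epsilon> / 4 * (real N / (real N + 1))" by (simp add: e_def field_simps)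
      also have "\<dots> \<le> \<epsilon> / 4 * 1" using \<epsilon> by (intro mult_left_mono) auto
      finally show ?thesis by simp
    qed
    finally show ?thesis using N hH by (intro bexI[of _ h]) auto
  qed
  have B: "\<exists>g\<in>G. dTN g h \<le> \<epsilon>/2" if h: "h \<in> H" for h
  proof -
    obtain s where s: "s \<in> solenoid p" "h = psi N u s" using h unfolding H_def by blast
    have "inK (\<lambda>n. s 0 * u n)" using u(1) unfolding W_def by blast
    then obtain g where g: "g \<in> G" "\<forall>n<N. g n = frac (s 0 * u n)" unfolding inK_def by blast
    have "dTN g h \<le> (\<Sum>n<N. dT (g n) (h n)) + (1/2)^N" by (rule dTN_le_initial')
    also have "(\<Sum>n<N. dT (g n) (h n)) = 0" using g(2) s(2) by (simp add: psi_def)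
    finally have "dTN g h \<le> (1/2)^N" by simp
    moreover have "(1/2::real)^N \<ge> 0" by simp
    ultimately have "dTN g h \<le> \<epsilon>/2" using N by linarith
    then show ?thesis using g(1) by blast
  qed
  have Hne: "H \<noteq> {}" using ccH by (simp add: cc_subgroup_def)
  have S1: "(SUP a\<in>G. INF b\<in>H. dTN a b) \<le> \<epsilon>/2"
  proof (rule cSUP_least[OF G_ne])
    fix a assume "a \<in> G"
    then obtain h where h: "h \<in> H" "dTN a h \<le> \<epsilon>/2" using A by blast
    have "(INF b\<in>H. dTN a b) \<le> dTN a h"
      by (rule cINF_lower[OF bdd_belowI2[of _ 0] h(1)]) (rule dTN_nonneg)
    then show "(INF b\<in>H. dTN a b) \<le> \<epsilon>/2" using h(2) by simp
  qed
  have S2: "(SUP b\<in>H. INF a\<in>G. dTN a b) \<le> \<epsilon>/2"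
  proof (rule cSUP_least[OF Hne])
    fix b assume "b \<in> H"
    then obtain g where g: "g \<in> G" "dTN g b \<le> \<epsilon>/2" using B by blast
    have "(INF a\<in>G. dTN a b) \<le> dTN g b"
      by (rule cINF_lower[OF bdd_belowI2[of _ 0] g(1)]) (rule dTN_nonneg)
    then show "(INF a\<in>G. dTN a b) \<le> \<epsilon>/2" using g(2) by simp
  qed
  have "hausd_TN G H < \<epsilon>" unfolding hausd_TN_def using S1 S2 \<epsilon> by simp
  then show "\<exists>H. cc_subgroup H \<and> top_group_iso H (solenoid p) \<and> hausd_TN G H < \<epsilon>"
    using ccH iso by blast
qed


end
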